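(* The subspace $\operatorname{Ker}\psi_1\subset k(Q_1//B)$ is closed under the bracket $[(a,\gamma),(b,\varepsilon)]=(b,\varepsilon^{(a,\gamma)})-(a,\gamma^{(b,\varepsilon)})$ (for $(a,\gamma),(b,\varepsilon)\in Q_1//B$, extended bilinearly), $\operatorname{Im}\psi_0$ is a Lie ideal of $\operatorname{Ker}\psi_1$, and the resulting quotient Lie algebra $\operatorname{Ker}\psi_1/\operatorname{Im}\psi_0$ is isomorphic, as a Lie algebra, to the first Hochschild cohomology $\operatorname{H}^1(\Lambda,\Lambda)=\operatorname{Der}_k(\Lambda)/\operatorname{Ad}_k(\Lambda)$ with the bracket induced by the commutator $[f,g]=f\circ g-g\circ f$.
   Context: Let $k$ be an algebraically closed field and $Q$ a finite quiver; $Q_n$ is the set of paths of length $n$ ($Q_0$ = vertices, $Q_1$ = arrows), $s(\gamma),t(\gamma)$ are source and terminus of a path $\gamma$, and in $kQ$ the product $\beta\alpha$ is the concatenation "first $\alpha$, then $\beta$" if $t(\alpha)=s(\beta)$, and $0$ otherwise. Let $Z$ be a minimal set of paths of length $\ge 2$ (no proper subpath of an element of $Z$ lies in $Z$) such that $\Lambda=kQ/\langle Z\rangle$ is finite dimensional. Let $B$ be the set of paths (vertices included) not containing any element of $Z$ as a subpath, $B_n=B\cap Q_n$; the classes of elements of $B$ form a basis of $\Lambda$. Paths are parallel if they have the same source and terminus; for sets of paths $X,Y$, $X//Y$ is the set of pairs $(\varepsilon,\gamma)\in X\times Y$ of parallel paths and $k(X//Y)$ is the vector space with basis $X//Y$.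 For a path $\varepsilon$ and $(a,\gamma)\in Q_1//B$, $\varepsilon^{(a,\gamma)}$ denotes the sum of all paths lying in $B$ obtained by replacing one occurrence of the arrow $a$ in $\varepsilon$ by $\gamma$ ($0$ if there is none); if $\varepsilon^{(a,\gamma)}=\sum_i\varepsilon_i$ ($\varepsilon_i\in B$) and $\eta$ is parallel to $\varepsilon$, then $(\eta,\varepsilon^{(a,\gamma)}):=\sum_i(\eta,\varepsilon_i)$ (zero if the sum is empty). Define $\psi_0:k(Q_0//B)\to k(Q_1//B)$ by $(e,\gamma)\mapsto\sum_{a\in Q_1,\ s(a)=e,\ a\gamma\in B}(a,a\gamma)-\sum_{a\in Q_1,\ t(a)=e,\ \gamma a\in B}(a,\gamma a)$, and $\psi_1:k(Q_1//B)\to k(Z//B)$ by $(a,\gamma)\mapsto\sum_{p\in Z}(p,p^{(a,\gamma)})$. $\operatorname{Der}_k(\Lambda)$ denotes the $k$-linear derivations and $\operatorname{Ad}_k(\Lambda)$ the inner derivations $x\mapsto ax-xa$. *)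

theory Defs
  imports "HOL-Computational_Algebra.Polynomial"
begin

definition alg_closed :: "'k::field itself \<Rightarrow> bool" where
  "alg_closed _ \<longleftrightarrow> (\<forall>p :: 'k poly. degree p > 0 \<longrightarrow> (\<exists>x. poly p x = 0))"

record ('v, 'a) quiver =
  verts :: "'v set"
  arrs  :: "'a set"
  src   :: "'a \<Rightarrow> 'v"
  tgt   :: "'a \<Rightarrow> 'v"

definition finite_quiver :: "('v, 'a) quiver \<Rightarrow> bool" where
  "finite_quiver Q \<longleftrightarrow> finite (verts Q) \<and> finite (arrs Q) \<and>
     (\<forall>a\<in>arrs Q. src Q a \<in> verts Q \<and> tgt Q a \<in> verts Q)"

text \<open>A path is a start vertex together with the list of its arrows in the order
  in which they are traversed; paths of length 0 are the vertices (trivial paths).\<close>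
type_synonym ('v, 'a) path = "'v \<times> 'a list"

definition valid_path :: "('v, 'a) quiver \<Rightarrow> ('v, 'a) path \<Rightarrow> bool" where
  "valid_path Q p \<longleftrightarrow> fst p \<in> verts Q \<and> set (snd p) \<subseteq> arrs Q \<and>
     (snd p \<noteq> [] \<longrightarrow> src Q (hd (snd p)) = fst p) \<and>
     (\<forall>i. Suc i < length (snd p) \<longrightarrow> tgt Q (snd p ! i) = src Q (snd p ! Suc i))"

definition ps :: "('v, 'a) path \<Rightarrow> 'v" where
  "ps p = fst p"

definition pt :: "('v, 'a) quiver \<Rightarrow> ('v, 'a) path \<Rightarrow> 'v" where
  "pt Q p = (if snd p = [] then fst p else tgt Q (last (snd p)))"

definition paths_len :: "('v, 'a) quiver \<Rightarrow> nat \<Rightarrow> ('v, 'a) path set" where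
  "paths_len Q n = {p. valid_path Q p \<and> length (snd p) = n}"

definition apath :: "('v, 'a) quiver \<Rightarrow> 'a \<Rightarrow> ('v, 'a) path" where
  "apath Q a = (src Q a, [a])"

definition subpath :: "('v, 'a) quiver \<Rightarrow> ('v, 'a) path \<Rightarrow> ('v, 'a) path \<Rightarrow> bool" where
  "subpath Q g d \<longleftrightarrow> (\<exists>xs ys. snd d = xs @ snd g @ ys \<and> fst g = pt Q (fst d, xs))"

definition monomial_relations :: "('v, 'a) quiver \<Rightarrow> ('v, 'a) path set \<Rightarrow> bool" where
  "monomial_relations Q Z \<longleftrightarrow>
     (\<forall>p\<in>Z. valid_path Q p \<and> length (snd p) \<ge> 2) \<and>
     (\<forall>p\<in>Z. \<forall>q\<in>Z. subpath Q q p \<longrightarrow> q = p)"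

definition Bset :: "('v, 'a) quiver \<Rightarrow> ('v, 'a) path set \<Rightarrow> ('v, 'a) path set" where
  "Bset Q Z = {p. valid_path Q p \<and> \<not> (\<exists>z\<in>Z. subpath Q z p)}"

definition parallel :: "('v, 'a) quiver \<Rightarrow> ('v, 'a) path \<Rightarrow> ('v, 'a) path \<Rightarrow> bool" where
  "parallel Q p q \<longleftrightarrow> ps p = ps q \<and> pt Q p = pt Q q"

definition ppairs :: "('v, 'a) quiver \<Rightarrow> ('v, 'a) path set \<Rightarrow> ('v, 'a) path set
    \<Rightarrow> (('v, 'a) path \<times> ('v, 'a) path) set" where
  "ppairs Q X Y = {(e, g). e \<in> X \<and> g \<in> Y \<and> parallel Q e g}"

section \<open>Vector spaces with a given basis, as finitely supported coefficient functions\<close>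

definition vecs :: "'x set \<Rightarrow> ('x \<Rightarrow> 'k::zero) set" where
  "vecs X = {f. \<forall>u. u \<notin> X \<longrightarrow> f u = 0}"

definition vzero :: "'x \<Rightarrow> 'k::zero" where "vzero = (\<lambda>_. 0)"
definition vadd :: "('x \<Rightarrow> 'k::plus) \<Rightarrow> ('x \<Rightarrow> 'k) \<Rightarrow> 'x \<Rightarrow> 'k" where
  "vadd f g = (\<lambda>u. f u + g u)"
definition vsub :: "('x \<Rightarrow> 'k::minus) \<Rightarrow> ('x \<Rightarrow> 'k) \<Rightarrow> 'x \<Rightarrow> 'k" where
  "vsub f g = (\<lambda>u. f u - g u)"
definition vscale :: "'k::times \<Rightarrow> ('x \<Rightarrow> 'k) \<Rightarrow> 'x \<Rightarrow> 'k" where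
  "vscale c f = (\<lambda>u. c * f u)"

type_synonym ('v, 'a, 'k) pvec = "('v, 'a) path \<times> ('v, 'a) path \<Rightarrow> 'k"
type_synonym ('v, 'a, 'k) lam = "('v, 'a) path \<Rightarrow> 'k"

section \<open>The monomial algebra Lambda = kQ/<Z>, realised on its basis B\<close>

text \<open>Product of basis paths p * q in kQ = concatenation "first q, then p" (if composable);
  in Lambda it is kept iff the result lies in B (otherwise it lies in the ideal <Z>).\<close>
definition lam_mult :: "('v, 'a) quiver \<Rightarrow> ('v, 'a) path set \<Rightarrow>
    ('v, 'a, 'k::field) lam \<Rightarrow> ('v, 'a, 'k) lam \<Rightarrow> ('v, 'a, 'k) lam" where
  "lam_mult Q Z f g = (\<lambda>z. if z \<in> Bset Q Z then
     (\<Sum>p\<in>Bset Q Z. \<Sum>q\<in>Bset Q Z.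
        if pt Q q = ps p \<and> (fst q, snd q @ snd p) = z then f p * g q else 0)
     else 0)"

definition Lam :: "('v, 'a) quiver \<Rightarrow> ('v, 'a) path set \<Rightarrow> ('v, 'a, 'k::field) lam set" where
  "Lam Q Z = vecs (Bset Q Z)"

text \<open>k-linear derivations of Lambda (as maps on Lambda, extended by 0 outside Lambda)\<close>
definition Der :: "('v, 'a) quiver \<Rightarrow> ('v, 'a) path set \<Rightarrow>
    (('v, 'a, 'k::field) lam \<Rightarrow> ('v, 'a, 'k) lam) set" where
  "Der Q Z = {D. (\<forall>x\<in>Lam Q Z. D x \<in> Lam Q Z) \<and> (\<forall>x. x \<notin> Lam Q Z \<longrightarrow> D x = vzero) \<and>
      (\<forall>x\<in>Lam Q Z. \<forall>y\<in>Lam Q Z. D (vadd x y) = vadd (D x) (D y)) \<and>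
      (\<forall>c. \<forall>x\<in>Lam Q Z. D (vscale c x) = vscale c (D x)) \<and>
      (\<forall>x\<in>Lam Q Z. \<forall>y\<in>Lam Q Z.
         D (lam_mult Q Z x y) = vadd (lam_mult Q Z (D x) y) (lam_mult Q Z x (D y)))}"

definition Ad :: "('v, 'a) quiver \<Rightarrow> ('v, 'a) path set \<Rightarrow>
    (('v, 'a, 'k::field) lam \<Rightarrow> ('v, 'a, 'k) lam) set" where
  "Ad Q Z = {(\<lambda>x. if x \<in> Lam Q Z then vsub (lam_mult Q Z a x) (lam_mult Q Z x a) else vzero)
             | a. a \<in> Lam Q Z}"

definition madd :: "('x \<Rightarrow> 'y \<Rightarrow> 'k::plus) \<Rightarrow> ('x \<Rightarrow> 'y \<Rightarrow> 'k) \<Rightarrow> 'x \<Rightarrow> 'y \<Rightarrow> 'k" where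
  "madd F G = (\<lambda>z. vadd (F z) (G z))"
definition msub :: "('x \<Rightarrow> 'y \<Rightarrow> 'k::minus) \<Rightarrow> ('x \<Rightarrow> 'y \<Rightarrow> 'k) \<Rightarrow> 'x \<Rightarrow> 'y \<Rightarrow> 'k" where
  "msub F G = (\<lambda>z. vsub (F z) (G z))"
definition mscale :: "'k::times \<Rightarrow> ('x \<Rightarrow> 'y \<Rightarrow> 'k) \<Rightarrow> 'x \<Rightarrow> 'y \<Rightarrow> 'k" where
  "mscale c F = (\<lambda>z. vscale c (F z))"
definition mcomm :: "(('y \<Rightarrow> 'k::minus) \<Rightarrow> ('y \<Rightarrow> 'k)) \<Rightarrow> (('y \<Rightarrow> 'k) \<Rightarrow> ('y \<Rightarrow> 'k))
    \<Rightarrow> ('y \<Rightarrow> 'k) \<Rightarrow> ('y \<Rightarrow> 'k)" where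
  "mcomm F G = (\<lambda>z. vsub (F (G z)) (G (F z)))"

definition repl :: "('v, 'a) path \<Rightarrow> nat \<Rightarrow> ('v, 'a) path \<Rightarrow> ('v, 'a) path" where
  "repl e i g = (fst e, take i (snd e) @ snd g @ drop (Suc i) (snd e))"

text \<open>coefficient of the path z in e^(a,g): the number of occurrences of the arrow a in e
  whose replacement by g yields z, provided z lies in B\<close>
definition subst_coeff :: "('v, 'a) quiver \<Rightarrow> ('v, 'a) path set \<Rightarrow>
    ('v, 'a) path \<Rightarrow> 'a \<Rightarrow> ('v, 'a) path \<Rightarrow> ('v, 'a) path \<Rightarrow> 'k::field" where
  "subst_coeff Q Z e a g z = of_nat (card {i. i < length (snd e) \<and> snd e ! i = a \<and>
      repl e i g = z \<and> z \<in> Bset Q Z})"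

abbreviation P0 :: "('v, 'a) quiver \<Rightarrow> ('v, 'a) path set \<Rightarrow> (('v, 'a) path \<times> ('v, 'a) path) set" where
  "P0 Q Z \<equiv> ppairs Q (paths_len Q 0) (Bset Q Z)"
abbreviation P1 :: "('v, 'a) quiver \<Rightarrow> ('v, 'a) path set \<Rightarrow> (('v, 'a) path \<times> ('v, 'a) path) set" where
  "P1 Q Z \<equiv> ppairs Q (paths_len Q 1) (Bset Q Z)"

text \<open>psi_0 on a basis element (e, g) of k(Q_0//B), evaluated at (q, z):
  (a, a g) for arrows a starting at e, minus (a, g a) for arrows a ending at e\<close>
definition psi0_b :: "('v, 'a) quiver \<Rightarrow> ('v, 'a) path set \<Rightarrow>
    ('v, 'a) path \<times> ('v, 'a) path \<Rightarrow> ('v, 'a, 'k::field) pvec" where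
  "psi0_b Q Z eg = (\<lambda>(q, z).
     (if \<exists>a\<in>arrs Q. q = apath Q a \<and> src Q a = fst (fst eg) \<and>
          z = (fst (snd eg), snd (snd eg) @ [a]) \<and> z \<in> Bset Q Z then 1 else 0)
   - (if \<exists>a\<in>arrs Q. q = apath Q a \<and> tgt Q a = fst (fst eg) \<and>
          z = (src Q a, a # snd (snd eg)) \<and> z \<in> Bset Q Z then 1 else 0))"

definition psi0 :: "('v, 'a) quiver \<Rightarrow> ('v, 'a) path set \<Rightarrow>
    ('v, 'a, 'k::field) pvec \<Rightarrow> ('v, 'a, 'k) pvec" where
  "psi0 Q Z x = (\<lambda>w. \<Sum>u\<in>P0 Q Z. x u * psi0_b Q Z u w)"

text \<open>psi_1 (a, g) = sum over p in Z of (p, p^(a,g)), extended linearly\<close>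
definition psi1 :: "('v, 'a) quiver \<Rightarrow> ('v, 'a) path set \<Rightarrow>
    ('v, 'a, 'k::field) pvec \<Rightarrow> ('v, 'a, 'k) pvec" where
  "psi1 Q Z x = (\<lambda>(p, z). if p \<in> Z then
      (\<Sum>u\<in>P1 Q Z. x u * subst_coeff Q Z p (hd (snd (fst u))) (snd u) z) else 0)"

definition Ker1 :: "('v, 'a) quiver \<Rightarrow> ('v, 'a) path set \<Rightarrow> ('v, 'a, 'k::field) pvec set" where
  "Ker1 Q Z = {x \<in> vecs (P1 Q Z). psi1 Q Z x = vzero}"

definition Im0 :: "('v, 'a) quiver \<Rightarrow> ('v, 'a) path set \<Rightarrow> ('v, 'a, 'k::field) pvec set" where
  "Im0 Q Z = psi0 Q Z ` vecs (P0 Q Z)"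

text \<open>[(a,g),(b,e)] = (b, e^(a,g)) - (a, g^(b,e)) on basis elements, evaluated at (q, z)\<close>
definition br_b :: "('v, 'a) quiver \<Rightarrow> ('v, 'a) path set \<Rightarrow>
    ('v, 'a) path \<times> ('v, 'a) path \<Rightarrow> ('v, 'a) path \<times> ('v, 'a) path \<Rightarrow> ('v, 'a, 'k::field) pvec" where
  "br_b Q Z ag be = (\<lambda>(q, z).
      (if q = fst be then subst_coeff Q Z (snd be) (hd (snd (fst ag))) (snd ag) z else 0)
    - (if q = fst ag then subst_coeff Q Z (snd ag) (hd (snd (fst be))) (snd be) z else 0))"

definition lie_br :: "('v, 'a) quiver \<Rightarrow> ('v, 'a) path set \<Rightarrow>
    ('v, 'a, 'k::field) pvec \<Rightarrow> ('v, 'a, 'k) pvec \<Rightarrow> ('v, 'a, 'k) pvec" where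
  "lie_br Q Z x y = (\<lambda>w. \<Sum>u\<in>P1 Q Z. \<Sum>v\<in>P1 Q Z. x u * y v * br_b Q Z u v w)"

end

theory Submission
  imports Defs
begin

fun vp :: "('v, 'a) quiver \<Rightarrow> 'v \<Rightarrow> 'a list \<Rightarrow> bool" where
  "vp Q v [] = (v \<in> verts Q)"
| "vp Q v (a # as) = (v \<in> verts Q \<and> a \<in> arrs Q \<and> src Q a = v \<and> vp Q (tgt Q a) as)"

lemma pt_Nil[simp]: "pt Q (v, []) = v" by (simp add: pt_def)
lemma pt_Cons[simp]: "pt Q (v, a # as) = pt Q (tgt Q a, as)"
  by (simp add: pt_def)

lemma pt_append: "pt Q (v, xs @ ys) = pt Q (pt Q (v, xs), ys)"
  by (induction xs arbitrary: v) auto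

lemma valid_vp: "finite_quiver Q \<Longrightarrow> valid_path Q (v, xs) \<longleftrightarrow> vp Q v xs"
proof (induction xs arbitrary: v)
  case Nil then show ?case by (simp add: valid_path_def)
next
  case (Cons a as)
  show ?case
  proof
    assume h: "valid_path Q (v, a # as)"
    have a: "a \<in> arrs Q" "src Q a = v" "v \<in> verts Q" using h by (auto simp: valid_path_def)
    have "valid_path Q (tgt Q a, as)"
      unfolding valid_path_def
    proof (intro conjI allI impI)
      show "fst (tgt Q a, as) \<in> verts Q" using a Cons.prems by (simp add: finite_quiver_def)
      show "set (snd (tgt Q a, as)) \<subseteq> arrs Q" using h by (auto simp: valid_path_def)
      assume "snd (tgt Q a, as) \<noteq> []"
      then show "src Q (hd (snd (tgt Q a, as))) = fst (tgt Q a, as)"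
        using h[unfolded valid_path_def] by (auto simp: hd_conv_nth dest: spec[of _ 0])
    next
      fix i assume "Suc i < length (snd (tgt Q a, as))"
      then show "tgt Q (snd (tgt Q a, as) ! i) = src Q (snd (tgt Q a, as) ! Suc i)"
        using h[unfolded valid_path_def] by (auto dest: spec[of _ "Suc i"])
    qed
    then show "vp Q v (a # as)" using a Cons.IH[of "tgt Q a"] Cons.prems by simp
  next
    assume h: "vp Q v (a # as)"
    then have v: "valid_path Q (tgt Q a, as)" using Cons.IH[of "tgt Q a"] Cons.prems by simp
    show "valid_path Q (v, a # as)"
      unfolding valid_path_def
    proof (intro conjI allI impI)
      fix i assume i: "Suc i < length (snd (v, a # as))"
      show "tgt Q (snd (v, a # as) ! i) = src Q (snd (v, a # as) ! Suc i)"
      proof (cases i)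
        case 0 then show ?thesis using v i by (auto simp: valid_path_def hd_conv_nth)
      next
        case (Suc j) then show ?thesis using v i by (auto simp: valid_path_def)
      qed
    qed (use h v in \<open>auto simp: valid_path_def\<close>)
  qed
qed

lemma vp_append: "vp Q v (xs @ ys) \<longleftrightarrow> vp Q v xs \<and> vp Q (pt Q (v, xs)) ys"
proof (induction xs arbitrary: v)
  case Nil then show ?case by (cases ys) auto
next
  case (Cons a as) then show ?case by auto
qed

lemma vp_verts: "vp Q v xs \<Longrightarrow> v \<in> verts Q"
  by (cases xs) auto

lemma pt_take_nth: "vp Q v xs \<Longrightarrow> i < length xs \<Longrightarrow> pt Q (v, take i xs) = src Q (xs ! i)"
proof (induction xs arbitrary: v i)
  case Nil then show ?case by simp
next
  case (Cons a as) then show ?case by (cases i) auto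
qed

lemma pt_repl_list:
  assumes "vp Q v xs" "i < length xs" "xs ! i = a" "pt Q (src Q a, gs) = tgt Q a"
  shows "pt Q (v, take i xs @ gs @ drop (Suc i) xs) = pt Q (v, xs)"
proof -
  have e: "xs = take i xs @ [a] @ drop (Suc i) xs" using assms(2,3) id_take_nth_drop by fastforce
  have s: "pt Q (v, take i xs) = src Q a" using pt_take_nth[OF assms(1,2)] assms(3) by simp
  have "pt Q (v, xs) = pt Q (v, take i xs @ [a] @ drop (Suc i) xs)" using e by simp
  also have "\<dots> = pt Q (tgt Q a, drop (Suc i) xs)" by (simp only: pt_append s) simp
  finally show ?thesis by (simp only: pt_append s assms(4))
qed

definition cat :: "('v, 'a) path \<Rightarrow> ('v, 'a) path \<Rightarrow> ('v, 'a) path" where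
  "cat q p = (fst q, snd q @ snd p)"

definition dl :: "('v, 'a) path \<Rightarrow> ('v, 'a, 'k::field) lam" where
  "dl p = (\<lambda>z. if z = p then 1 else 0)"

locale MA =
  fixes Q :: "('v, 'a) quiver" and Z :: "('v, 'a) path set"
  assumes fq: "finite_quiver Q" and mr: "monomial_relations Q Z" and fB: "finite (Bset Q Z)"
begin

abbreviation "B \<equiv> Bset Q Z"

lemma B_iff: "p \<in> B \<longleftrightarrow> vp Q (fst p) (snd p) \<and> \<not> (\<exists>z\<in>Z. subpath Q z p)"
  using valid_vp[OF fq, of "fst p" "snd p"] by (simp add: Bset_def)

lemma B_vp: "p \<in> B \<Longrightarrow> vp Q (fst p) (snd p)"
  using B_iff by blast

lemma Z_vp: "g \<in> Z \<Longrightarrow> vp Q (fst g) (snd g)"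
  using mr valid_vp[OF fq, of "fst g" "snd g"] by (simp add: monomial_relations_def)

lemma Z_len: "g \<in> Z \<Longrightarrow> length (snd g) \<ge> 2"
  using mr by (simp add: monomial_relations_def)

lemma sub_pre: "subpath Q g (v, xs) \<Longrightarrow> subpath Q g (v, xs @ ys)"
  unfolding subpath_def
proof (elim exE conjE)
  fix as bs assume h: "snd (v, xs) = as @ snd g @ bs" "fst g = pt Q (fst (v, xs), as)"
  show "\<exists>as bs. snd (v, xs @ ys) = as @ snd g @ bs \<and> fst g = pt Q (fst (v, xs @ ys), as)"
    by (rule exI[of _ as], rule exI[of _ "bs @ ys"]) (use h in simp)
qed

lemma sub_suf: "subpath Q g (pt Q (v, xs), ys) \<Longrightarrow> subpath Q g (v, xs @ ys)"
  unfolding subpath_def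
proof (elim exE conjE)
  fix as bs assume h: "snd (pt Q (v, xs), ys) = as @ snd g @ bs"
    "fst g = pt Q (fst (pt Q (v, xs), ys), as)"
  show "\<exists>as bs. snd (v, xs @ ys) = as @ snd g @ bs \<and> fst g = pt Q (fst (v, xs @ ys), as)"
    by (rule exI[of _ "xs @ as"], rule exI[of _ bs]) (use h in \<open>simp add: pt_append\<close>)
qed

lemma sub_mid: "fst g = pt Q (v, xs) \<Longrightarrow> subpath Q g (v, xs @ snd g @ ys)"
  unfolding subpath_def by (rule exI[of _ xs], rule exI[of _ ys]) simp

lemma B_pre: "(v, xs @ ys) \<in> B \<Longrightarrow> (v, xs) \<in> B"
  using B_iff vp_append sub_pre by fastforce

lemma B_suf: "(v, xs @ ys) \<in> B \<Longrightarrow> (pt Q (v, xs), ys) \<in> B"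
  using B_iff vp_append sub_suf by fastforce

lemma notB_Z: "g \<in> Z \<Longrightarrow> fst g = pt Q (v, xs) \<Longrightarrow> (v, xs @ snd g @ ys) \<notin> B"
  using B_iff sub_mid by blast

lemma vert_B: "v \<in> verts Q \<Longrightarrow> (v, []) \<in> B"
  using B_iff Z_len unfolding subpath_def by fastforce

lemma arr_B: "a \<in> arrs Q \<Longrightarrow> apath Q a \<in> B"
proof -
  assume a: "a \<in> arrs Q"
  have "vp Q (src Q a) [a]" using a fq by (simp add: finite_quiver_def)
  moreover have "\<not> subpath Q g (src Q a, [a])" if "g \<in> Z" for g
  proof
    assume "subpath Q g (src Q a, [a])"
    then obtain xs ys where "[a] = xs @ snd g @ ys" unfolding subpath_def by auto
    then have "length [a] = length xs + length (snd g) + length ys" by simp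
    then have "length (snd g) \<le> 1" by simp
    with Z_len[OF that] show False by simp
  qed
  ultimately show ?thesis using B_iff by (simp add: apath_def)
qed

lemma P1_iff: "u \<in> P1 Q Z \<longleftrightarrow> (\<exists>a\<in>arrs Q. fst u = apath Q a \<and> snd u \<in> B \<and> fst (snd u) = src Q a \<and> pt Q (snd u) = tgt Q a)"
proof
  assume u: "u \<in> P1 Q Z"
  then obtain q g where ug: "u = (q, g)" "q \<in> paths_len Q 1" "g \<in> B" "parallel Q q g"
    unfolding ppairs_def by auto
  then obtain a where q: "snd q = [a]" unfolding paths_len_def by (auto simp: length_Suc_conv)
  have "vp Q (fst q) (snd q)" using ug(2) valid_vp[OF fq, of "fst q" "snd q"] by (simp add: paths_len_def)
  then have a: "a \<in> arrs Q" "src Q a = fst q" using q by auto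
  have qa: "q = apath Q a" using q a(2) by (simp add: apath_def prod_eq_iff)
  have "fst g = src Q a" "pt Q g = tgt Q a" using ug(4) qa by (simp_all add: parallel_def ps_def apath_def)
  then show "\<exists>a\<in>arrs Q. fst u = apath Q a \<and> snd u \<in> B \<and> fst (snd u) = src Q a \<and> pt Q (snd u) = tgt Q a"
    using ug qa a by auto
next
  assume "\<exists>a\<in>arrs Q. fst u = apath Q a \<and> snd u \<in> B \<and> fst (snd u) = src Q a \<and> pt Q (snd u) = tgt Q a"
  then obtain a where a: "a \<in> arrs Q" "fst u = apath Q a" "snd u \<in> B" "fst (snd u) = src Q a" "pt Q (snd u) = tgt Q a"
    by blast
  have "apath Q a \<in> paths_len Q 1" using arr_B[OF a(1)] by (simp add: paths_len_def apath_def Bset_def)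
  moreover have "parallel Q (apath Q a) (snd u)" using a by (simp add: parallel_def ps_def apath_def)
  ultimately have "(fst u, snd u) \<in> P1 Q Z" using a unfolding ppairs_def by simp
  then show "u \<in> P1 Q Z" by simp
qed

lemma P1_hd: "u \<in> P1 Q Z \<Longrightarrow> fst u = apath Q (hd (snd (fst u)))"
  using P1_iff by (auto simp: apath_def)

lemma finite_P1: "finite (P1 Q Z)"
proof -
  have "P1 Q Z \<subseteq> (\<lambda>a. apath Q a) ` arrs Q \<times> B"
  proof
    fix u assume "u \<in> P1 Q Z"
    then obtain a where "a \<in> arrs Q" "fst u = apath Q a" "snd u \<in> B" using P1_iff by blast
    then show "u \<in> (\<lambda>a. apath Q a) ` arrs Q \<times> B" by (cases u) auto
  qed
  moreover have "finite (arrs Q)" using fq by (simp add: finite_quiver_def)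
  ultimately show ?thesis using fB finite_subset by blast
qed

lemma P0_a: assumes u: "u \<in> P0 Q Z" shows "fst u \<in> paths_len Q 0" "snd u \<in> B" "parallel Q (fst u) (snd u)"
    using u unfolding ppairs_def by auto
lemma P0_b: assumes u: "u \<in> P0 Q Z" shows "snd u \<in> B \<and> fst (snd u) = pt Q (snd u) \<and> fst u = (fst (snd u), [])"
proof -
  note 1 = P0_a[OF u]
  have 2: "snd (fst u) = []" using 1(1) unfolding paths_len_def by simp
  have 3: "fst (fst u) = fst (snd u)" "pt Q (fst u) = pt Q (snd u)" using 1(3) unfolding parallel_def ps_def by auto
  have 4: "pt Q (fst u) = fst (fst u)" using 2 unfolding pt_def by simp
  have 5: "fst u = (fst (snd u), [])" using 2 3(1) by (simp add: prod_eq_iff)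
  show ?thesis using 1(2) 3 4 5 by simp
qed
lemma P0_c: assumes h: "snd u \<in> B \<and> fst (snd u) = pt Q (snd u) \<and> fst u = (fst (snd u), [])"
  shows "u \<in> P0 Q Z"
proof -
  obtain g where g: "g = snd u" by simp
  obtain v where v: "v = fst g" by simp
  have u: "u = ((v, []), g)" using h g v by (simp add: prod_eq_iff)
  have gB: "g \<in> B" and pg: "pt Q g = v" using h g v by auto
  have vv: "v \<in> verts Q" using vp_verts[OF B_vp[OF gB]] v by simp
  have "(v, []) \<in> paths_len Q 0" using vv unfolding paths_len_def valid_path_def by simp
  moreover have "parallel Q (v, []) g" using v pg unfolding parallel_def ps_def by simp
  ultimately show "u \<in> P0 Q Z" using gB u unfolding ppairs_def by simp
qed
lemma P0_iff: "u \<in> P0 Q Z \<longleftrightarrow> snd u \<in> B \<and> fst (snd u) = pt Q (snd u) \<and> fst u = (fst (snd u), [])"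
  using P0_b P0_c by blast

lemma finite_P0: "finite (P0 Q Z)"
proof -
  have "P0 Q Z \<subseteq> (\<lambda>g. ((fst g, []), g)) ` B"
  proof
    fix u assume "u \<in> P0 Q Z"
    then have "snd u \<in> B" "u = ((fst (snd u), []), snd u)" using P0_iff[of u] by (auto simp: prod_eq_iff)
    then show "u \<in> (\<lambda>g. ((fst g, []), g)) ` B" by blast
  qed
  then show ?thesis using fB finite_subset by blast
qed

lemma cat_B: "cat q p \<in> B \<Longrightarrow> pt Q q = fst p \<Longrightarrow> q \<in> B \<and> p \<in> B"
proof -
  assume h: "cat q p \<in> B" "pt Q q = fst p"
  have "(fst q, snd q @ snd p) \<in> B" using h by (simp add: cat_def)
  then show ?thesis using B_pre[of "fst q" "snd q" "snd p"] B_suf[of "fst q" "snd q" "snd p"] h(2) by simp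
qed

lemma cat_vp: "vp Q (fst q) (snd q) \<Longrightarrow> vp Q (fst p) (snd p) \<Longrightarrow> pt Q q = fst p \<Longrightarrow> vp Q (fst (cat q p)) (snd (cat q p))"
  unfolding cat_def by (simp add: vp_append)

lemma pt_cat: "pt Q (cat q p) = pt Q (pt Q q, snd p)"
  unfolding cat_def by (simp add: pt_append)

lemma pt_cat2: "pt Q q = fst p \<Longrightarrow> pt Q (cat q p) = pt Q p"
  by (simp add: pt_cat)

end

lemma sum_lessThan_add: "(\<Sum>i<m + n. f i) = (\<Sum>i<m. f i) + (\<Sum>j<n. f (m + j))"
  for f :: "nat \<Rightarrow> 'b::comm_monoid_add"
  by (induction n) (simp_all add: add.assoc)

lemma sum_single:
  assumes "finite S" "\<And>q. P q \<Longrightarrow> q = r"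
  shows "(\<Sum>q\<in>S. if P q then c else 0) = (if r \<in> S \<and> P r then c else 0)"
proof -
  have "(\<Sum>q\<in>S. if P q then c else 0) = (\<Sum>q\<in>S. if q = r then (if P r then c else 0) else 0)"
    by (rule sum.cong) (use assms(2) in auto)
  also have "\<dots> = (if r \<in> S \<and> P r then c else 0)" using assms(1) by simp
  finally show ?thesis .
qed

lemma if_sum: "(if C then sum f S else 0) = sum (\<lambda>i. if C then f i else 0) S"
  by simp

lemma if_if_conj: "(if P then (if R then a else b) else b) = (if P \<and> R then a else b)"
  by simp

lemma fst_repl[simp]: "fst (repl e i g) = fst e" by (simp add: repl_def)

lemma repl_cat_left: "i < length (snd q) \<Longrightarrow> repl (cat q p) i g = cat (repl q i g) p"
  by (simp add: repl_def cat_def)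

lemma repl_cat_right: "repl (cat q p) (length (snd q) + j) g = cat q (repl p j g)"
  by (simp add: repl_def cat_def)

lemma nth_cat_left: "i < length (snd q) \<Longrightarrow> snd (cat q p) ! i = snd q ! i"
  by (simp add: cat_def nth_append)

lemma nth_cat_right: "snd (cat q p) ! (length (snd q) + j) = snd p ! j"
  by (simp add: cat_def nth_append)

lemma len_cat: "length (snd (cat q p)) = length (snd q) + length (snd p)"
  by (simp add: cat_def)

definition Tc :: "('v, 'a) quiver \<Rightarrow> ('v, 'a) path set \<Rightarrow> ('v, 'a) path \<Rightarrow> nat \<Rightarrow>
   ('v, 'a) path \<times> ('v, 'a) path \<Rightarrow> ('v, 'a) path \<Rightarrow> bool" where
  "Tc Q Z w i u z \<longleftrightarrow> snd w ! i = hd (snd (fst u)) \<and> repl w i (snd u) = z \<and> z \<in> Bset Q Z"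

definition dc :: "('v, 'a) quiver \<Rightarrow> ('v, 'a) path set \<Rightarrow> ('v, 'a, 'k::field) pvec \<Rightarrow>
    ('v, 'a) path \<Rightarrow> ('v, 'a) path \<Rightarrow> 'k" where
  "dc Q Z x w z = (\<Sum>u\<in>P1 Q Z. x u * subst_coeff Q Z w (hd (snd (fst u))) (snd u) z)"

lemma dc_expand: "dc Q Z x w z = (\<Sum>u\<in>P1 Q Z. \<Sum>i<length (snd w). if Tc Q Z w i u z then x u else 0)"
proof -
  have sc: "subst_coeff Q Z w a g z = (\<Sum>i<length (snd w). if snd w ! i = a \<and> repl w i g = z \<and> z \<in> Bset Q Z then 1 else 0)"
    for a g
  proof -
    have e: "{i. i < length (snd w) \<and> snd w ! i = a \<and> repl w i g = z \<and> z \<in> Bset Q Z}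
       = {i \<in> {..<length (snd w)}. snd w ! i = a \<and> repl w i g = z \<and> z \<in> Bset Q Z}" by auto
    show ?thesis unfolding subst_coeff_def e
      by (simp add: sum.inter_filter[symmetric])
  qed
  have "x u * subst_coeff Q Z w (hd (snd (fst u))) (snd u) z = (\<Sum>i<length (snd w). if Tc Q Z w i u z then x u else 0)" for u
    unfolding Tc_def by (simp only: sc sum_distrib_left) (rule sum.cong; simp)
  then show ?thesis unfolding dc_def by simp
qed

context MA begin

lemma dc_notB: "z \<notin> B \<Longrightarrow> dc Q Z x w z = 0"
  by (simp add: dc_expand Tc_def)

lemma dc_vert: "dc Q Z x (v, []) z = 0"
  by (simp add: dc_expand)

lemma P1_pt: "u \<in> P1 Q Z \<Longrightarrow> pt Q (src Q (hd (snd (fst u))), snd (snd u)) = tgt Q (hd (snd (fst u)))"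
proof -
  assume "u \<in> P1 Q Z"
  then obtain a where a: "a \<in> arrs Q" "fst u = apath Q a" "snd u \<in> B" "fst (snd u) = src Q a" "pt Q (snd u) = tgt Q a"
    using P1_iff by blast
  have "hd (snd (fst u)) = a" using a(2) by (simp add: apath_def)
  moreover have "(src Q a, snd (snd u)) = snd u" using a(4) by (simp add: prod_eq_iff)
  ultimately show ?thesis using a(5) by simp
qed

lemma pt_repl:
  assumes "u \<in> P1 Q Z" "vp Q (fst q) (snd q)" "i < length (snd q)" "snd q ! i = hd (snd (fst u))"
  shows "pt Q (repl q i (snd u)) = pt Q q"
proof -
  have "pt Q (fst q, take i (snd q) @ snd (snd u) @ drop (Suc i) (snd q)) = pt Q (fst q, snd q)"
    by (rule pt_repl_list[OF assms(2,3,4) P1_pt[OF assms(1)]])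
  then show ?thesis by (simp add: repl_def)
qed

lemma Tc_par:
  assumes "u \<in> P1 Q Z" "vp Q (fst q) (snd q)" "i < length (snd q)" "Tc Q Z q i u z"
  shows "fst z = fst q \<and> pt Q z = pt Q q \<and> z \<in> B"
  using assms pt_repl[OF assms(1,2,3)] unfolding Tc_def by auto

lemma dc_par:
  assumes "vp Q (fst q) (snd q)" "dc Q Z x q z \<noteq> 0"
  shows "fst z = fst q \<and> pt Q z = pt Q q \<and> z \<in> B"
proof -
  from assms(2) obtain u where u: "u \<in> P1 Q Z" "(\<Sum>i<length (snd q). if Tc Q Z q i u z then x u else 0) \<noteq> 0"
    unfolding dc_expand using sum.not_neutral_contains_not_neutral by blast
  from u(2) obtain i where "i < length (snd q)" "(if Tc Q Z q i u z then x u else 0) \<noteq> 0"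
    using sum.not_neutral_contains_not_neutral by blast
  then have "u \<in> P1 Q Z" "i < length (snd q)" "Tc Q Z q i u z" using u(1) by (auto split: if_splits)
  then show ?thesis using Tc_par assms(1) by blast
qed

lemma keyA:
  assumes u: "u \<in> P1 Q Z" and vq: "vp Q (fst q0) (snd q0)" and c: "pt Q q0 = fst p0"
    and zB: "z \<in> B" and i: "i < length (snd q0)"
  shows "(\<Sum>q\<in>B. if (pt Q q = fst p0 \<and> cat q p0 = z) \<and> Tc Q Z q0 i u q then x u else 0)
       = (if Tc Q Z (cat q0 p0) i u z then x u else 0)"
proof -
  let ?r = "repl q0 i (snd u)"
  have "(\<Sum>q\<in>B. if (pt Q q = fst p0 \<and> cat q p0 = z) \<and> Tc Q Z q0 i u q then x u else 0)
      = (if ?r \<in> B \<and> ((pt Q ?r = fst p0 \<and> cat ?r p0 = z) \<and> Tc Q Z q0 i u ?r) then x u else 0)"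
    by (rule sum_single[OF fB]) (simp add: Tc_def)
  also have "(?r \<in> B \<and> ((pt Q ?r = fst p0 \<and> cat ?r p0 = z) \<and> Tc Q Z q0 i u ?r)) = Tc Q Z (cat q0 p0) i u z"
  proof
    assume "?r \<in> B \<and> ((pt Q ?r = fst p0 \<and> cat ?r p0 = z) \<and> Tc Q Z q0 i u ?r)"
    then show "Tc Q Z (cat q0 p0) i u z"
      using zB i by (simp add: Tc_def nth_cat_left repl_cat_left)
  next
    assume h: "Tc Q Z (cat q0 p0) i u z"
    then have h1: "snd q0 ! i = hd (snd (fst u))" "cat ?r p0 = z"
      using i by (simp_all add: Tc_def nth_cat_left repl_cat_left)
    have "(fst ?r, snd ?r @ snd p0) \<in> B" using h1(2) zB by (simp add: cat_def)
    then have X: "(fst q0, snd ?r) \<in> B" using B_pre[of "fst ?r" "snd ?r" "snd p0"] by simp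
    have e: "(fst q0, snd ?r) = ?r" by (simp add: prod_eq_iff)
    from X have rB: "?r \<in> B" by (simp only: e)
    have "pt Q ?r = fst p0" using pt_repl[OF u vq i h1(1)] c by simp
    then show "?r \<in> B \<and> ((pt Q ?r = fst p0 \<and> cat ?r p0 = z) \<and> Tc Q Z q0 i u ?r)"
      using rB h1 by (simp add: Tc_def)
  qed
  finally show ?thesis .
qed

lemma keyB:
  assumes u: "u \<in> P1 Q Z" and c: "pt Q q0 = fst p0"
    and zB: "z \<in> B" and j: "j < length (snd p0)"
  shows "(\<Sum>p\<in>B. if (fst p = pt Q q0 \<and> cat q0 p = z) \<and> Tc Q Z p0 j u p then x u else 0)
       = (if Tc Q Z (cat q0 p0) (length (snd q0) + j) u z then x u else 0)"
proof -
  let ?r = "repl p0 j (snd u)"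
  have "(\<Sum>p\<in>B. if (fst p = pt Q q0 \<and> cat q0 p = z) \<and> Tc Q Z p0 j u p then x u else 0)
      = (if ?r \<in> B \<and> ((fst ?r = pt Q q0 \<and> cat q0 ?r = z) \<and> Tc Q Z p0 j u ?r) then x u else 0)"
    by (rule sum_single[OF fB]) (simp add: Tc_def)
  also have "(?r \<in> B \<and> ((fst ?r = pt Q q0 \<and> cat q0 ?r = z) \<and> Tc Q Z p0 j u ?r)) = Tc Q Z (cat q0 p0) (length (snd q0) + j) u z"
  proof
    assume "?r \<in> B \<and> ((fst ?r = pt Q q0 \<and> cat q0 ?r = z) \<and> Tc Q Z p0 j u ?r)"
    then show "Tc Q Z (cat q0 p0) (length (snd q0) + j) u z"
      using zB by (simp add: Tc_def nth_cat_right repl_cat_right)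
  next
    assume h: "Tc Q Z (cat q0 p0) (length (snd q0) + j) u z"
    then have h1: "snd p0 ! j = hd (snd (fst u))" "cat q0 ?r = z"
      by (simp_all add: Tc_def nth_cat_right repl_cat_right)
    have "(fst q0, snd q0 @ snd ?r) \<in> B" using h1(2) zB by (simp add: cat_def)
    then have "(pt Q (fst q0, snd q0), snd ?r) \<in> B" using B_suf by blast
    moreover have "pt Q (fst q0, snd q0) = fst p0" using c by simp
    ultimately have X: "(fst p0, snd ?r) \<in> B" by simp
    have e: "(fst p0, snd ?r) = ?r" by (simp add: prod_eq_iff)
    from X have rB: "?r \<in> B" by (simp only: e)
    show "?r \<in> B \<and> ((fst ?r = pt Q q0 \<and> cat q0 ?r = z) \<and> Tc Q Z p0 j u ?r)"
      using rB h1 c by (simp add: Tc_def)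
  qed
  finally show ?thesis .
qed

lemma CI:
  assumes vq: "vp Q (fst q0) (snd q0)" and c: "pt Q q0 = fst p0" and zB: "z \<in> B"
  shows "dc Q Z x (cat q0 p0) z =
     (\<Sum>p\<in>B. if fst p = pt Q q0 \<and> cat q0 p = z then dc Q Z x p0 p else 0)
   + (\<Sum>q\<in>B. if pt Q q = fst p0 \<and> cat q p0 = z then dc Q Z x q0 q else 0)"
proof -
  let ?lq = "length (snd q0)" and ?lp = "length (snd p0)"
  have A: "(\<Sum>q\<in>B. if pt Q q = fst p0 \<and> cat q p0 = z then dc Q Z x q0 q else 0)
     = (\<Sum>u\<in>P1 Q Z. \<Sum>i<?lq. if Tc Q Z (cat q0 p0) i u z then x u else 0)"
  proof -
    have "(\<Sum>q\<in>B. if pt Q q = fst p0 \<and> cat q p0 = z then dc Q Z x q0 q else 0)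
       = (\<Sum>q\<in>B. \<Sum>u\<in>P1 Q Z. \<Sum>i<?lq. if (pt Q q = fst p0 \<and> cat q p0 = z) \<and> Tc Q Z q0 i u q then x u else 0)"
      by (rule sum.cong[OF refl], case_tac "pt Q xa = fst p0"; case_tac "cat xa p0 = z"; simp add: dc_expand)
    also have "\<dots> = (\<Sum>u\<in>P1 Q Z. \<Sum>q\<in>B. \<Sum>i<?lq. if (pt Q q = fst p0 \<and> cat q p0 = z) \<and> Tc Q Z q0 i u q then x u else 0)"
      by (rule sum.swap)
    also have "\<dots> = (\<Sum>u\<in>P1 Q Z. \<Sum>i<?lq. \<Sum>q\<in>B. if (pt Q q = fst p0 \<and> cat q p0 = z) \<and> Tc Q Z q0 i u q then x u else 0)"
      by (rule sum.cong[OF refl], rule sum.swap)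
    also have "\<dots> = (\<Sum>u\<in>P1 Q Z. \<Sum>i<?lq. if Tc Q Z (cat q0 p0) i u z then x u else 0)"
      by (rule sum.cong[OF refl], rule sum.cong[OF refl], rule keyA[OF _ vq c zB]) auto
    finally show ?thesis .
  qed
  have Bp: "(\<Sum>p\<in>B. if fst p = pt Q q0 \<and> cat q0 p = z then dc Q Z x p0 p else 0)
     = (\<Sum>u\<in>P1 Q Z. \<Sum>j<?lp. if Tc Q Z (cat q0 p0) (?lq + j) u z then x u else 0)"
  proof -
    have "(\<Sum>p\<in>B. if fst p = pt Q q0 \<and> cat q0 p = z then dc Q Z x p0 p else 0)
       = (\<Sum>p\<in>B. \<Sum>u\<in>P1 Q Z. \<Sum>j<?lp. if (fst p = pt Q q0 \<and> cat q0 p = z) \<and> Tc Q Z p0 j u p then x u else 0)"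
      by (rule sum.cong[OF refl], case_tac "fst xa = pt Q q0"; case_tac "cat q0 xa = z"; simp add: dc_expand)
    also have "\<dots> = (\<Sum>u\<in>P1 Q Z. \<Sum>p\<in>B. \<Sum>j<?lp. if (fst p = pt Q q0 \<and> cat q0 p = z) \<and> Tc Q Z p0 j u p then x u else 0)"
      by (rule sum.swap)
    also have "\<dots> = (\<Sum>u\<in>P1 Q Z. \<Sum>j<?lp. \<Sum>p\<in>B. if (fst p = pt Q q0 \<and> cat q0 p = z) \<and> Tc Q Z p0 j u p then x u else 0)"
      by (rule sum.cong[OF refl], rule sum.swap)
    also have "\<dots> = (\<Sum>u\<in>P1 Q Z. \<Sum>j<?lp. if Tc Q Z (cat q0 p0) (?lq + j) u z then x u else 0)"
      by (rule sum.cong[OF refl], rule sum.cong[OF refl], rule keyB[OF _ c zB]) auto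
    finally show ?thesis .
  qed
  have "dc Q Z x (cat q0 p0) z = (\<Sum>u\<in>P1 Q Z. (\<Sum>i<?lq. if Tc Q Z (cat q0 p0) i u z then x u else 0)
         + (\<Sum>j<?lp. if Tc Q Z (cat q0 p0) (?lq + j) u z then x u else 0))"
    unfolding dc_expand len_cat sum_lessThan_add ..
  also have "\<dots> = (\<Sum>p\<in>B. if fst p = pt Q q0 \<and> cat q0 p = z then dc Q Z x p0 p else 0)
   + (\<Sum>q\<in>B. if pt Q q = fst p0 \<and> cat q p0 = z then dc Q Z x q0 q else 0)"
    unfolding A Bp sum.distrib by simp
  finally show ?thesis .
qed

end

lemma sum_single2:
  assumes "finite S" "\<And>q. P q \<Longrightarrow> q = r"
  shows "(\<Sum>q\<in>S. if P q then c q else 0) = (if r \<in> S \<and> P r then c r else 0)"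
proof -
  have "(\<Sum>q\<in>S. if P q then c q else 0) = (\<Sum>q\<in>S. if q = r then (if P r then c r else 0) else 0)"
  proof (rule sum.cong[OF refl])
    fix q
    show "(if P q then c q else 0) = (if q = r then (if P r then c r else 0) else 0)"
    proof (cases "P q")
      case True
      then have "q = r" by (rule assms(2))
      then show ?thesis using True by simp
    next
      case False
      then show ?thesis by (cases "q = r") simp_all
    qed
  qed
  also have "\<dots> = (if r \<in> S \<and> P r then c r else 0)" using assms(1) by simp
  finally show ?thesis .
qed

definition Phi :: "('v, 'a) quiver \<Rightarrow> ('v, 'a) path set \<Rightarrow> ('v, 'a, 'k::field) pvec \<Rightarrow>
    ('v, 'a, 'k) lam \<Rightarrow> ('v, 'a, 'k) lam" where
  "Phi Q Z x f = (if f \<in> Lam Q Z then (\<lambda>z. \<Sum>w\<in>Bset Q Z. f w * dc Q Z x w z) else vzero)"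

lemma psi1_dc: "p \<in> Z \<Longrightarrow> psi1 Q Z x (p, z) = dc Q Z x p z"
  by (simp add: psi1_def dc_def)

lemma Lam_iff: "f \<in> Lam Q Z \<longleftrightarrow> (\<forall>u. u \<notin> Bset Q Z \<longrightarrow> f u = 0)"
  by (simp add: Lam_def vecs_def)

lemma lam_mult_eq: "lam_mult Q Z f g z = (if z \<in> Bset Q Z then
   (\<Sum>p\<in>Bset Q Z. \<Sum>q\<in>Bset Q Z. if pt Q q = fst p \<and> cat q p = z then f p * g q else 0) else 0)"
  by (simp add: lam_mult_def cat_def ps_def)

lemma lam_mult_Lam: "lam_mult Q Z f g \<in> Lam Q Z"
  by (simp add: Lam_iff lam_mult_def)

context MA begin

lemma VAN:
  assumes psi: "psi1 Q Z x = vzero" and vw: "vp Q (fst w) (snd w)" and wB: "w \<notin> B"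
  shows "dc Q Z x w z = 0"
proof (cases "z \<in> B")
  case False then show ?thesis by (rule dc_notB)
next
  case zB: True
  obtain g where g: "g \<in> Z" "subpath Q g w" using wB vw B_iff by blast
  then obtain xs ys where xy: "snd w = xs @ snd g @ ys" "fst g = pt Q (fst w, xs)"
    unfolding subpath_def by blast
  define u0 where "u0 = (fst w, xs)"
  define q0 where "q0 = cat u0 g"
  define p0 where "p0 = (pt Q q0, ys)"
  have w: "w = cat q0 p0" using xy by (simp add: q0_def p0_def u0_def cat_def prod_eq_iff)
  have vw2: "vp Q (fst w) ((xs @ snd g) @ ys)" using vw xy by simp
  have vxg: "vp Q (fst w) (xs @ snd g)" using vw2 vp_append[of Q "fst w" "xs @ snd g" ys] by blast
  have vq0: "vp Q (fst q0) (snd q0)" using vxg by (simp add: q0_def u0_def cat_def)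
  have vu0: "vp Q (fst u0) (snd u0)" using vxg vp_append[of Q "fst w" xs "snd g"] by (simp add: u0_def)
  have cu: "pt Q u0 = fst g" using xy by (simp add: u0_def)
  have S1: "(\<Sum>p\<in>B. if fst p = pt Q q0 \<and> cat q0 p = z then dc Q Z x p0 p else 0) = 0"
  proof (rule sum.neutral, rule ballI)
    fix p assume "p \<in> B"
    have "cat q0 p \<noteq> z"
    proof
      assume "cat q0 p = z"
      moreover have "cat q0 p = (fst w, xs @ snd g @ snd p)" by (simp add: q0_def u0_def cat_def)
      ultimately have "(fst w, xs @ snd g @ snd p) \<in> B" using zB by simp
      then show False using notB_Z[OF g(1) xy(2)] by blast
    qed
    then show "(if fst p = pt Q q0 \<and> cat q0 p = z then dc Q Z x p0 p else 0) = 0" by simp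
  qed
  have S2: "(\<Sum>q\<in>B. if pt Q q = fst p0 \<and> cat q p0 = z then dc Q Z x q0 q else 0) = 0"
  proof (rule sum.neutral, rule ballI)
    fix q assume qB: "q \<in> B"
    have "dc Q Z x q0 q = (\<Sum>p\<in>B. if fst p = pt Q u0 \<and> cat u0 p = q then dc Q Z x g p else 0)
      + (\<Sum>q'\<in>B. if pt Q q' = fst g \<and> cat q' g = q then dc Q Z x u0 q' else 0)"
      unfolding q0_def by (rule CI[OF vu0 cu qB])
    also have "\<dots> = 0"
    proof -
      have "(\<Sum>p\<in>B. if fst p = pt Q u0 \<and> cat u0 p = q then dc Q Z x g p else 0) = 0"
        by (rule sum.neutral) (use psi psi1_dc[OF g(1), where x=x and Q=Q] in \<open>auto simp: vzero_def\<close>)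
      moreover have "(\<Sum>q'\<in>B. if pt Q q' = fst g \<and> cat q' g = q then dc Q Z x u0 q' else 0) = 0"
      proof (rule sum.neutral, rule ballI)
        fix q' assume "q' \<in> B"
        have "\<not> (pt Q q' = fst g \<and> cat q' g = q)"
        proof
          assume h: "pt Q q' = fst g \<and> cat q' g = q"
          then have "(fst q', snd q' @ snd g @ []) \<in> B" using qB by (simp add: cat_def)
          moreover have "fst g = pt Q (fst q', snd q')" using h by simp
          ultimately show False using notB_Z[OF g(1)] by blast
        qed
        then show "(if pt Q q' = fst g \<and> cat q' g = q then dc Q Z x u0 q' else 0) = 0" by (rule if_not_P)
      qed
      ultimately show ?thesis by simp
    qed
    finally show "(if pt Q q = fst p0 \<and> cat q p0 = z then dc Q Z x q0 q else 0) = 0" by simp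
  qed
  have "dc Q Z x w z = (\<Sum>p\<in>B. if fst p = pt Q q0 \<and> cat q0 p = z then dc Q Z x p0 p else 0)
     + (\<Sum>q\<in>B. if pt Q q = fst p0 \<and> cat q p0 = z then dc Q Z x q0 q else 0)"
    unfolding w by (rule CI[OF vq0 _ zB]) (simp add: p0_def)
  then show ?thesis using S1 S2 by simp
qed

lemma LM1: "q \<in> B \<Longrightarrow> lam_mult Q Z f (dl q) z =
   (if z \<in> B then (\<Sum>p\<in>B. if pt Q q = fst p \<and> cat q p = z then f p else 0) else 0)"
proof -
  assume qB: "q \<in> B"
  have "(\<Sum>q'\<in>B. if pt Q q' = fst p \<and> cat q' p = z then f p * dl q q' else 0)
      = (if pt Q q = fst p \<and> cat q p = z then f p else 0)" for p
  proof -
    have "(\<Sum>q'\<in>B. if pt Q q' = fst p \<and> cat q' p = z then f p * dl q q' else 0)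
        = (\<Sum>q'\<in>B. if q' = q \<and> (pt Q q' = fst p \<and> cat q' p = z) then f p else 0)"
      by (rule sum.cong) (auto simp: dl_def)
    also have "\<dots> = (if pt Q q = fst p \<and> cat q p = z then f p else 0)"
      by (subst sum_single[OF fB, of _ q]) (use qB in auto)
    finally show ?thesis .
  qed
  then show ?thesis by (simp add: lam_mult_eq)
qed

lemma LM2: "p \<in> B \<Longrightarrow> lam_mult Q Z (dl p) g z =
   (if z \<in> B then (\<Sum>q\<in>B. if pt Q q = fst p \<and> cat q p = z then g q else 0) else 0)"
proof -
  assume pB: "p \<in> B"
  have "(\<Sum>p'\<in>B. \<Sum>q\<in>B. if pt Q q = fst p' \<and> cat q p' = z then dl p p' * g q else 0)
     = (\<Sum>p'\<in>B. if p' = p then (\<Sum>q\<in>B. if pt Q q = fst p \<and> cat q p = z then g q else 0) else 0)"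
  proof (rule sum.cong[OF refl])
    fix p' assume "p' \<in> B"
    show "(\<Sum>q\<in>B. if pt Q q = fst p' \<and> cat q p' = z then dl p p' * g q else 0)
      = (if p' = p then (\<Sum>q\<in>B. if pt Q q = fst p \<and> cat q p = z then g q else 0) else 0)"
    proof (cases "p' = p")
      case True then show ?thesis by (simp add: dl_def cong: if_cong)
    next
      case False then show ?thesis by (simp add: dl_def cong: if_cong)
    qed
  qed
  also have "\<dots> = (\<Sum>q\<in>B. if pt Q q = fst p \<and> cat q p = z then g q else 0)"
    using pB fB by simp
  finally show ?thesis by (simp add: lam_mult_eq)
qed

lemma dl_Lam: "p \<in> B \<Longrightarrow> dl p \<in> Lam Q Z"
  by (auto simp: Lam_iff dl_def)

lemma prod_dl:
  assumes pB: "p \<in> B" and qB: "q \<in> B"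
  shows "lam_mult Q Z (dl p) (dl q) = (if pt Q q = fst p \<and> cat q p \<in> B then dl (cat q p) else vzero)"
proof
  fix z
  have S: "(\<Sum>p'\<in>B. if pt Q q = fst p' \<and> cat q p' = z then dl p p' else 0)
      = (\<Sum>p'\<in>B. if p' = p \<and> (pt Q q = fst p' \<and> cat q p' = z) then 1 else 0)"
    by (rule sum.cong[OF refl]) (simp add: dl_def)
  also have "\<dots> = (if pt Q q = fst p \<and> cat q p = z then 1 else 0)"
    by (subst sum_single[OF fB, of _ p]) (use pB in auto)
  finally have S2: "(\<Sum>p'\<in>B. if pt Q q = fst p' \<and> cat q p' = z then dl p p' else 0) = (if pt Q q = fst p \<and> cat q p = z then 1 else 0)" .
  have "lam_mult Q Z (dl p) (dl q) z = (if z \<in> B then (\<Sum>p'\<in>B. if pt Q q = fst p' \<and> cat q p' = z then dl p p' else 0) else 0)"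
    by (rule LM1[OF qB])
  also have "\<dots> = (if z \<in> B then (if pt Q q = fst p \<and> cat q p = z then 1 else 0) else 0)"
    by (simp only: S2)
  also have "\<dots> = (if pt Q q = fst p \<and> cat q p \<in> B then dl (cat q p) else vzero) z"
    by (auto simp: dl_def vzero_def)
  finally show "lam_mult Q Z (dl p) (dl q) z = (if pt Q q = fst p \<and> cat q p \<in> B then dl (cat q p) else vzero) z" .
qed

end

lemma if_mult_0: "(if C then a else 0) * b = (if C then a * b else (0::'b::semiring_0))"
  by simp
lemma mult_if_0: "b * (if C then a else 0) = (if C then b * a else (0::'b::semiring_0))"
  by simp

lemma sum_if_const_cond: "(\<Sum>i\<in>S. if A \<and> P i then a * h i else 0) = (if A then a * (\<Sum>i\<in>S. if P i then h i else 0) else (0::'b::comm_semiring_0))"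
  by (cases A) (simp_all add: sum_distrib_left mult_if_0)

context MA begin

lemma Phi_app: "f \<in> Lam Q Z \<Longrightarrow> Phi Q Z x f z = (\<Sum>w\<in>B. f w * dc Q Z x w z)"
  by (simp add: Phi_def)

lemma Phi_Lam: "Phi Q Z x f \<in> Lam Q Z"
  by (auto simp: Phi_def Lam_iff dc_notB vzero_def)

lemma leib_L:
  assumes psi: "psi1 Q Z x = vzero"
  shows "(\<Sum>w\<in>B. lam_mult Q Z f g w * dc Q Z x w z)
    = (\<Sum>p\<in>B. \<Sum>q\<in>B. if pt Q q = fst p then f p * g q * dc Q Z x (cat q p) z else 0)"
proof -
  have "(\<Sum>w\<in>B. lam_mult Q Z f g w * dc Q Z x w z)
     = (\<Sum>w\<in>B. \<Sum>p\<in>B. \<Sum>q\<in>B. if pt Q q = fst p \<and> cat q p = w then f p * g q * dc Q Z x w z else 0)"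
  proof (rule sum.cong[OF refl])
    fix w assume "w \<in> B"
    then show "lam_mult Q Z f g w * dc Q Z x w z
      = (\<Sum>p\<in>B. \<Sum>q\<in>B. if pt Q q = fst p \<and> cat q p = w then f p * g q * dc Q Z x w z else 0)"
      by (simp add: lam_mult_eq sum_distrib_right if_mult_0 cong: if_cong)
  qed
  also have "\<dots> = (\<Sum>p\<in>B. \<Sum>w\<in>B. \<Sum>q\<in>B. if pt Q q = fst p \<and> cat q p = w then f p * g q * dc Q Z x w z else 0)"
    by (rule sum.swap)
  also have "\<dots> = (\<Sum>p\<in>B. \<Sum>q\<in>B. \<Sum>w\<in>B. if pt Q q = fst p \<and> cat q p = w then f p * g q * dc Q Z x w z else 0)"
    by (rule sum.cong[OF refl], rule sum.swap)
  also have "\<dots> = (\<Sum>p\<in>B. \<Sum>q\<in>B. if cat q p \<in> B \<and> pt Q q = fst p then f p * g q * dc Q Z x (cat q p) z else 0)"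
  proof (rule sum.cong[OF refl], rule sum.cong[OF refl])
    fix p q
    show "(\<Sum>w\<in>B. if pt Q q = fst p \<and> cat q p = w then f p * g q * dc Q Z x w z else 0)
      = (if cat q p \<in> B \<and> pt Q q = fst p then f p * g q * dc Q Z x (cat q p) z else 0)"
      by (subst sum_single2[OF fB, of _ "cat q p"]) auto
  qed
  also have "\<dots> = (\<Sum>p\<in>B. \<Sum>q\<in>B. if pt Q q = fst p then f p * g q * dc Q Z x (cat q p) z else 0)"
  proof (rule sum.cong[OF refl], rule sum.cong[OF refl])
    fix p q assume pB: "p \<in> B" and qB: "q \<in> B"
    show "(if cat q p \<in> B \<and> pt Q q = fst p then f p * g q * dc Q Z x (cat q p) z else 0)
      = (if pt Q q = fst p then f p * g q * dc Q Z x (cat q p) z else 0)"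
    proof (cases "pt Q q = fst p")
      case c: True
      show ?thesis
      proof (cases "cat q p \<in> B")
        case False
        have "vp Q (fst (cat q p)) (snd (cat q p))" using cat_vp[OF B_vp[OF qB] B_vp[OF pB] c] .
        then have "dc Q Z x (cat q p) z = 0" using VAN[OF psi _ False] by blast
        then show ?thesis using c False by simp
      qed (use c in simp)
    qed simp
  qed
  finally show ?thesis .
qed

lemma leib_R1:
  assumes fL: "f \<in> Lam Q Z" and zB: "z \<in> B"
  shows "lam_mult Q Z (Phi Q Z x f) g z = (\<Sum>p\<in>B. \<Sum>q\<in>B. if pt Q q = fst p then f p * g q *
       (\<Sum>p'\<in>B. if fst p' = pt Q q \<and> cat q p' = z then dc Q Z x p p' else 0) else 0)"
proof -
  have "lam_mult Q Z (Phi Q Z x f) g z = (\<Sum>p'\<in>B. \<Sum>q\<in>B. if pt Q q = fst p' \<and> cat q p' = z then (\<Sum>p\<in>B. f p * dc Q Z x p p') * g q else 0)"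
    using zB fL by (simp add: lam_mult_eq Phi_app cong: if_cong)
  also have "\<dots> = (\<Sum>p'\<in>B. \<Sum>q\<in>B. \<Sum>p\<in>B. if pt Q q = fst p' \<and> cat q p' = z then f p * g q * dc Q Z x p p' else 0)"
  proof (rule sum.cong[OF refl], rule sum.cong[OF refl])
    fix p' q
    show "(if pt Q q = fst p' \<and> cat q p' = z then (\<Sum>p\<in>B. f p * dc Q Z x p p') * g q else 0)
      = (\<Sum>p\<in>B. if pt Q q = fst p' \<and> cat q p' = z then f p * g q * dc Q Z x p p' else 0)"
    proof (cases "pt Q q = fst p' \<and> cat q p' = z")
      case True
      have "(\<Sum>p\<in>B. f p * dc Q Z x p p') * g q = (\<Sum>p\<in>B. f p * g q * dc Q Z x p p')"
        unfolding sum_distrib_right by (rule sum.cong[OF refl]) (simp add: mult_ac)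
      then show ?thesis by (simp only: if_P[OF True])
    next
      case False then show ?thesis by (simp only: if_not_P[OF False] if_False sum.neutral_const)
    qed
  qed
  also have "\<dots> = (\<Sum>q\<in>B. \<Sum>p'\<in>B. \<Sum>p\<in>B. if pt Q q = fst p' \<and> cat q p' = z then f p * g q * dc Q Z x p p' else 0)"
    by (rule sum.swap)
  also have "\<dots> = (\<Sum>q\<in>B. \<Sum>p\<in>B. \<Sum>p'\<in>B. if pt Q q = fst p' \<and> cat q p' = z then f p * g q * dc Q Z x p p' else 0)"
    by (rule sum.cong[OF refl], rule sum.swap)
  also have "\<dots> = (\<Sum>p\<in>B. \<Sum>q\<in>B. \<Sum>p'\<in>B. if pt Q q = fst p' \<and> cat q p' = z then f p * g q * dc Q Z x p p' else 0)"
    by (rule sum.swap)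
  also have "\<dots> = (\<Sum>p\<in>B. \<Sum>q\<in>B. \<Sum>p'\<in>B. if pt Q q = fst p \<and> (fst p' = pt Q q \<and> cat q p' = z) then f p * g q * dc Q Z x p p' else 0)"
  proof (rule sum.cong[OF refl], rule sum.cong[OF refl], rule sum.cong[OF refl])
    fix p q p' assume pB: "p \<in> B"
    show "(if pt Q q = fst p' \<and> cat q p' = z then f p * g q * dc Q Z x p p' else 0)
     = (if pt Q q = fst p \<and> (fst p' = pt Q q \<and> cat q p' = z) then f p * g q * dc Q Z x p p' else 0)"
    proof (cases "dc Q Z x p p' = 0")
      case False
      have "fst p' = fst p \<and> pt Q p' = pt Q p \<and> p' \<in> B" by (rule dc_par[OF B_vp[OF pB] False])
      then have e: "fst p' = fst p" by simp
      have "(pt Q q = fst p' \<and> cat q p' = z) = (pt Q q = fst p \<and> (fst p' = pt Q q \<and> cat q p' = z))"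
        using e by auto
      then show ?thesis by (simp only:)
    qed simp
  qed
  also have "\<dots> = (\<Sum>p\<in>B. \<Sum>q\<in>B. if pt Q q = fst p then f p * g q *
       (\<Sum>p'\<in>B. if fst p' = pt Q q \<and> cat q p' = z then dc Q Z x p p' else 0) else 0)"
    by (rule sum.cong[OF refl], rule sum.cong[OF refl], rule sum_if_const_cond)
  finally show ?thesis .
qed

lemma leib_R2:
  assumes gL: "g \<in> Lam Q Z" and zB: "z \<in> B"
  shows "lam_mult Q Z f (Phi Q Z x g) z = (\<Sum>p\<in>B. \<Sum>q\<in>B. if pt Q q = fst p then f p * g q *
       (\<Sum>q'\<in>B. if pt Q q' = fst p \<and> cat q' p = z then dc Q Z x q q' else 0) else 0)"
proof -
  have "lam_mult Q Z f (Phi Q Z x g) z = (\<Sum>p\<in>B. \<Sum>q'\<in>B. if pt Q q' = fst p \<and> cat q' p = z then f p * (\<Sum>q\<in>B. g q * dc Q Z x q q') else 0)"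
    using zB gL by (simp add: lam_mult_eq Phi_app cong: if_cong)
  also have "\<dots> = (\<Sum>p\<in>B. \<Sum>q'\<in>B. \<Sum>q\<in>B. if pt Q q' = fst p \<and> cat q' p = z then f p * g q * dc Q Z x q q' else 0)"
  proof (rule sum.cong[OF refl], rule sum.cong[OF refl])
    fix p q'
    show "(if pt Q q' = fst p \<and> cat q' p = z then f p * (\<Sum>q\<in>B. g q * dc Q Z x q q') else 0)
      = (\<Sum>q\<in>B. if pt Q q' = fst p \<and> cat q' p = z then f p * g q * dc Q Z x q q' else 0)"
    proof (cases "pt Q q' = fst p \<and> cat q' p = z")
      case True
      have "f p * (\<Sum>q\<in>B. g q * dc Q Z x q q') = (\<Sum>q\<in>B. f p * g q * dc Q Z x q q')"
        unfolding sum_distrib_left by (rule sum.cong[OF refl]) (simp add: mult_ac)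
      then show ?thesis by (simp only: if_P[OF True])
    next
      case False then show ?thesis by (simp only: if_not_P[OF False] if_False sum.neutral_const)
    qed
  qed
  also have "\<dots> = (\<Sum>p\<in>B. \<Sum>q\<in>B. \<Sum>q'\<in>B. if pt Q q' = fst p \<and> cat q' p = z then f p * g q * dc Q Z x q q' else 0)"
    by (rule sum.cong[OF refl], rule sum.swap)
  also have "\<dots> = (\<Sum>p\<in>B. \<Sum>q\<in>B. \<Sum>q'\<in>B. if pt Q q = fst p \<and> (pt Q q' = fst p \<and> cat q' p = z) then f p * g q * dc Q Z x q q' else 0)"
  proof (rule sum.cong[OF refl], rule sum.cong[OF refl], rule sum.cong[OF refl])
    fix p q q' assume qB: "q \<in> B"
    show "(if pt Q q' = fst p \<and> cat q' p = z then f p * g q * dc Q Z x q q' else 0)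
     = (if pt Q q = fst p \<and> (pt Q q' = fst p \<and> cat q' p = z) then f p * g q * dc Q Z x q q' else 0)"
    proof (cases "dc Q Z x q q' = 0")
      case False
      have "fst q' = fst q \<and> pt Q q' = pt Q q \<and> q' \<in> B" by (rule dc_par[OF B_vp[OF qB] False])
      then have e: "pt Q q' = pt Q q" by simp
      have "(pt Q q' = fst p \<and> cat q' p = z) = (pt Q q = fst p \<and> (pt Q q' = fst p \<and> cat q' p = z))"
        using e by auto
      then show ?thesis by (simp only:)
    qed simp
  qed
  also have "\<dots> = (\<Sum>p\<in>B. \<Sum>q\<in>B. if pt Q q = fst p then f p * g q *
       (\<Sum>q'\<in>B. if pt Q q' = fst p \<and> cat q' p = z then dc Q Z x q q' else 0) else 0)"
    by (rule sum.cong[OF refl], rule sum.cong[OF refl], rule sum_if_const_cond)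
  finally show ?thesis .
qed

lemma Phi_leib:
  assumes psi: "psi1 Q Z x = vzero" and fL: "f \<in> Lam Q Z" and gL: "g \<in> Lam Q Z"
  shows "Phi Q Z x (lam_mult Q Z f g) = vadd (lam_mult Q Z (Phi Q Z x f) g) (lam_mult Q Z f (Phi Q Z x g))"
proof
  fix z
  show "Phi Q Z x (lam_mult Q Z f g) z = vadd (lam_mult Q Z (Phi Q Z x f) g) (lam_mult Q Z f (Phi Q Z x g)) z"
  proof (cases "z \<in> B")
    case False
    have "Phi Q Z x (lam_mult Q Z f g) z = (\<Sum>w\<in>B. lam_mult Q Z f g w * dc Q Z x w z)"
      by (rule Phi_app[OF lam_mult_Lam])
    then show ?thesis using False
      by (simp add: vadd_def dc_notB lam_mult_eq)
  next
    case zB: True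
    have "Phi Q Z x (lam_mult Q Z f g) z = (\<Sum>p\<in>B. \<Sum>q\<in>B. if pt Q q = fst p then f p * g q * dc Q Z x (cat q p) z else 0)"
      by (simp add: Phi_app[OF lam_mult_Lam] leib_L[OF psi])
    also have "\<dots> = (\<Sum>p\<in>B. \<Sum>q\<in>B. (if pt Q q = fst p then f p * g q *
       (\<Sum>p'\<in>B. if fst p' = pt Q q \<and> cat q p' = z then dc Q Z x p p' else 0) else 0)
      + (if pt Q q = fst p then f p * g q *
       (\<Sum>q'\<in>B. if pt Q q' = fst p \<and> cat q' p = z then dc Q Z x q q' else 0) else 0))"
    proof (rule sum.cong[OF refl], rule sum.cong[OF refl])
      fix p q assume pB: "p \<in> B" and qB: "q \<in> B"
      show "(if pt Q q = fst p then f p * g q * dc Q Z x (cat q p) z else 0) =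
        (if pt Q q = fst p then f p * g q *
       (\<Sum>p'\<in>B. if fst p' = pt Q q \<and> cat q p' = z then dc Q Z x p p' else 0) else 0)
      + (if pt Q q = fst p then f p * g q *
       (\<Sum>q'\<in>B. if pt Q q' = fst p \<and> cat q' p = z then dc Q Z x q q' else 0) else 0)"
      proof (cases "pt Q q = fst p")
        case True
        then show ?thesis using CI[OF B_vp[OF qB] True zB, of x] by (simp add: distrib_left)
      qed simp
    qed
    also have "\<dots> = lam_mult Q Z (Phi Q Z x f) g z + lam_mult Q Z f (Phi Q Z x g) z"
      unfolding leib_R1[OF fL zB] leib_R2[OF gL zB] sum.distrib ..
    finally show ?thesis by (simp add: vadd_def)
  qed
qed

end

lemma DerD:
  assumes "D \<in> Der Q Z"
  shows "\<And>x. x \<in> Lam Q Z \<Longrightarrow> D x \<in> Lam Q Z"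
    and "\<And>x. x \<notin> Lam Q Z \<Longrightarrow> D x = vzero"
    and "\<And>x y. x \<in> Lam Q Z \<Longrightarrow> y \<in> Lam Q Z \<Longrightarrow> D (vadd x y) = vadd (D x) (D y)"
    and "\<And>c x. x \<in> Lam Q Z \<Longrightarrow> D (vscale c x) = vscale c (D x)"
    and "\<And>x y. x \<in> Lam Q Z \<Longrightarrow> y \<in> Lam Q Z \<Longrightarrow>
         D (lam_mult Q Z x y) = vadd (lam_mult Q Z (D x) y) (lam_mult Q Z x (D y))"
  using assms unfolding Der_def by auto

lemma DerI:
  assumes "\<And>x. x \<in> Lam Q Z \<Longrightarrow> D x \<in> Lam Q Z"
    and "\<And>x. x \<notin> Lam Q Z \<Longrightarrow> D x = vzero"
    and "\<And>x y. x \<in> Lam Q Z \<Longrightarrow> y \<in> Lam Q Z \<Longrightarrow> D (vadd x y) = vadd (D x) (D y)"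
    and "\<And>c x. x \<in> Lam Q Z \<Longrightarrow> D (vscale c x) = vscale c (D x)"
    and "\<And>x y. x \<in> Lam Q Z \<Longrightarrow> y \<in> Lam Q Z \<Longrightarrow>
         D (lam_mult Q Z x y) = vadd (lam_mult Q Z (D x) y) (lam_mult Q Z x (D y))"
  shows "D \<in> Der Q Z"
  using assms unfolding Der_def by auto

lemma vzero_Lam: "vzero \<in> Lam Q Z" by (simp add: Lam_iff vzero_def)
lemma vadd_Lam: "x \<in> Lam Q Z \<Longrightarrow> y \<in> Lam Q Z \<Longrightarrow> vadd x y \<in> Lam Q Z" by (simp add: Lam_iff vadd_def)
lemma vsub_Lam: "x \<in> Lam Q Z \<Longrightarrow> y \<in> Lam Q Z \<Longrightarrow> vsub x y \<in> Lam Q Z" by (simp add: Lam_iff vsub_def)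
lemma vscale_Lam: "x \<in> Lam Q Z \<Longrightarrow> vscale c x \<in> Lam Q Z" by (simp add: Lam_iff vscale_def)

lemma Der_zero: "D \<in> Der Q Z \<Longrightarrow> D vzero = vzero"
proof -
  assume D: "D \<in> Der Q Z"
  have "vscale 0 vzero = (vzero :: ('a, 'b, 'c) lam)" by (simp add: vscale_def vzero_def)
  then have "D vzero = D (vscale 0 vzero)" by simp
  also have "\<dots> = vscale 0 (D vzero)" by (rule DerD(4)[OF D vzero_Lam])
  also have "\<dots> = vzero" by (simp add: vscale_def vzero_def)
  finally show ?thesis .
qed

lemma lam_mult_zero1: "lam_mult Q Z vzero g = vzero"
  by (rule ext) (simp add: lam_mult_eq vzero_def cong: if_cong)
lemma lam_mult_zero2: "lam_mult Q Z f vzero = vzero"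
  by (rule ext) (simp add: lam_mult_eq vzero_def cong: if_cong)

lemma Der_sum:
  assumes D: "D \<in> Der Q Z" and S: "finite S" "S \<subseteq> Bset Q Z"
  shows "D (\<lambda>z. \<Sum>w\<in>S. c w * dl w z) = (\<lambda>z. \<Sum>w\<in>S. c w * D (dl w) z)"
  using S
proof (induction S rule: finite_induct)
  case empty
  have "(\<lambda>z. \<Sum>w\<in>{}. c w * dl w z) = vzero" by (simp add: vzero_def fun_eq_iff)
  then show ?case using Der_zero[OF D] by (simp add: vzero_def fun_eq_iff)
next
  case (insert a S)
  have dL: "dl a \<in> Lam Q Z" using insert by (auto simp: Lam_iff dl_def)
  have sL: "(\<lambda>z. \<Sum>w\<in>S. c w * dl w z) \<in> Lam Q Z"
    using insert by (auto simp: Lam_iff dl_def intro!: sum.neutral)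
  have e: "(\<lambda>z. \<Sum>w\<in>insert a S. c w * dl w z) = vadd (vscale (c a) (dl a)) (\<lambda>z. \<Sum>w\<in>S. c w * dl w z)"
    using insert by (simp add: vadd_def vscale_def fun_eq_iff)
  have "D (\<lambda>z. \<Sum>w\<in>insert a S. c w * dl w z) = vadd (D (vscale (c a) (dl a))) (D (\<lambda>z. \<Sum>w\<in>S. c w * dl w z))"
    unfolding e by (rule DerD(3)[OF D vscale_Lam[OF dL] sL])
  also have "\<dots> = vadd (vscale (c a) (D (dl a))) (\<lambda>z. \<Sum>w\<in>S. c w * D (dl w) z)"
    using DerD(4)[OF D dL] insert by simp
  also have "\<dots> = (\<lambda>z. \<Sum>w\<in>insert a S. c w * D (dl w) z)"
    using insert by (simp add: vadd_def vscale_def fun_eq_iff)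
  finally show ?case .
qed

context MA begin

lemma Lam_expand: "f \<in> Lam Q Z \<Longrightarrow> f = (\<lambda>z. \<Sum>w\<in>B. f w * dl w z)"
proof
  fix z assume f: "f \<in> Lam Q Z"
  show "f z = (\<Sum>w\<in>B. f w * dl w z)"
  proof (cases "z \<in> B")
    case True
    have "(\<Sum>w\<in>B. f w * dl w z) = (\<Sum>w\<in>B. if w = z then f w else 0)"
      by (rule sum.cong) (auto simp: dl_def)
    then show ?thesis using True fB by simp
  next
    case False
    have "f z = 0" using f False unfolding Lam_def vecs_def by blast
    moreover have "(\<Sum>w\<in>B. f w * dl w z) = 0"
      by (rule sum.neutral) (use False in \<open>auto simp: dl_def\<close>)
    ultimately show ?thesis by simp
  qed
qed

lemma Der_expand: "D \<in> Der Q Z \<Longrightarrow> f \<in> Lam Q Z \<Longrightarrow> D f = (\<lambda>z. \<Sum>w\<in>B. f w * D (dl w) z)"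
  using Der_sum[OF _ fB subset_refl, of D f] Lam_expand[of f] by simp

lemma Phi_Der:
  assumes psi: "psi1 Q Z x = vzero"
  shows "Phi Q Z x \<in> Der Q Z"
proof (rule DerI)
  show "Phi Q Z x f \<in> Lam Q Z" for f by (rule Phi_Lam)
  show "f \<notin> Lam Q Z \<Longrightarrow> Phi Q Z x f = vzero" for f by (simp add: Phi_def)
  show "Phi Q Z x (vadd f g) = vadd (Phi Q Z x f) (Phi Q Z x g)" if "f \<in> Lam Q Z" "g \<in> Lam Q Z" for f g
    using that vadd_Lam[OF that] by (simp add: Phi_app vadd_def fun_eq_iff sum.distrib distrib_right)
  show "Phi Q Z x (vscale c f) = vscale c (Phi Q Z x f)" if "f \<in> Lam Q Z" for c f
    using that vscale_Lam[OF that] by (simp add: Phi_app vscale_def fun_eq_iff sum_distrib_left mult.assoc)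
  show "Phi Q Z x (lam_mult Q Z f g) = vadd (lam_mult Q Z (Phi Q Z x f) g) (lam_mult Q Z f (Phi Q Z x g))"
    if "f \<in> Lam Q Z" "g \<in> Lam Q Z" for f g
    by (rule Phi_leib[OF psi that])
qed

lemma dc_add: "dc Q Z (vadd x y) w z = dc Q Z x w z + dc Q Z y w z"
  by (simp add: dc_def vadd_def sum.distrib distrib_right)

lemma dc_scale: "dc Q Z (vscale c x) w z = c * dc Q Z x w z"
  by (simp add: dc_def vscale_def sum_distrib_left mult.assoc)

lemma Phi_add: "Phi Q Z (vadd x y) = madd (Phi Q Z x) (Phi Q Z y)"
  by (simp add: Phi_def madd_def vadd_def fun_eq_iff dc_add[unfolded vadd_def] sum.distrib distrib_left vzero_def)

lemma Phi_scale: "Phi Q Z (vscale c x) = mscale c (Phi Q Z x)"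
  by (simp add: Phi_def mscale_def vscale_def fun_eq_iff dc_scale[unfolded vscale_def] sum_distrib_left mult_ac vzero_def)

lemma Phi_vert: "v \<in> verts Q \<Longrightarrow> Phi Q Z x (dl (v, [])) = vzero"
proof
  fix z assume v: "v \<in> verts Q"
  have "Phi Q Z x (dl (v, [])) z = (\<Sum>w\<in>B. dl (v, []) w * dc Q Z x w z)"
    by (rule Phi_app[OF dl_Lam[OF vert_B[OF v]]])
  also have "\<dots> = 0"
  proof (rule sum.neutral, rule ballI)
    fix w show "dl (v, []) w * dc Q Z x w z = 0"
      by (cases "w = (v, [])") (simp_all add: dl_def dc_vert)
  qed
  finally show "Phi Q Z x (dl (v, [])) z = vzero z" by (simp add: vzero_def)
qed

lemma LMv1: "v \<in> verts Q \<Longrightarrow> lam_mult Q Z h (dl (v, [])) z = (if z \<in> B \<and> fst z = v then h z else 0)"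
proof -
  assume v: "v \<in> verts Q"
  have "(\<Sum>p\<in>B. if pt Q (v, []) = fst p \<and> cat (v, []) p = z then h p else 0)
      = (if z \<in> B \<and> (pt Q (v, []) = fst z \<and> cat (v, []) z = z) then h z else 0)"
    by (subst sum_single2[OF fB, of _ z]) (auto simp: cat_def prod_eq_iff)
  then show ?thesis using LM1[OF vert_B[OF v], of h z] by (auto simp: cat_def)
qed

lemma LMv2: "v \<in> verts Q \<Longrightarrow> lam_mult Q Z (dl (v, [])) h z = (if z \<in> B \<and> pt Q z = v then h z else 0)"
proof -
  assume v: "v \<in> verts Q"
  have "(\<Sum>q\<in>B. if pt Q q = fst (v, []) \<and> cat q (v, []) = z then h q else 0)
      = (if z \<in> B \<and> (pt Q z = fst (v, []) \<and> cat z (v, []) = z) then h z else 0)"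
    by (subst sum_single2[OF fB, of _ z]) (auto simp: cat_def prod_eq_iff)
  then show ?thesis using LM2[OF vert_B[OF v], of h z] by (auto simp: cat_def)
qed

lemma DCA:
  assumes a: "a \<in> arrs Q"
  shows "dc Q Z y (apath Q a) z = (if (apath Q a, z) \<in> P1 Q Z then y (apath Q a, z) else 0)"
proof -
  have "dc Q Z y (apath Q a) z = (\<Sum>u\<in>P1 Q Z. if Tc Q Z (apath Q a) 0 u z then y u else 0)"
    by (simp add: dc_expand apath_def)
  also have "\<dots> = (\<Sum>u\<in>P1 Q Z. if u \<in> P1 Q Z \<and> Tc Q Z (apath Q a) 0 u z then y u else 0)"
    by (rule sum.cong) auto
  also have "\<dots> = (if (apath Q a, z) \<in> P1 Q Z \<and> ((apath Q a, z) \<in> P1 Q Z \<and> Tc Q Z (apath Q a) 0 (apath Q a, z) z) then y (apath Q a, z) else 0)"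
  proof (rule sum_single2[OF finite_P1])
    fix u assume h: "u \<in> P1 Q Z \<and> Tc Q Z (apath Q a) 0 u z"
    then obtain a' where a': "a' \<in> arrs Q" "fst u = apath Q a'" "snd u \<in> B" "fst (snd u) = src Q a'"
      using P1_iff by blast
    have h1: "hd (snd (fst u)) = a'" using a'(2) by (simp add: apath_def)
    have t: "snd (apath Q a) ! 0 = hd (snd (fst u))" "repl (apath Q a) 0 (snd u) = z" using h by (simp_all add: Tc_def)
    have aa: "a = a'" using t(1) h1 by (simp add: apath_def)
    have "repl (apath Q a) 0 (snd u) = (src Q a, snd (snd u))" by (simp add: repl_def apath_def)
    then have "z = (src Q a, snd (snd u))" using t(2) by simp
    then have "z = snd u" using a'(4) aa by (simp add: prod_eq_iff)
    then show "u = (apath Q a, z)" using a'(2) aa by (simp add: prod_eq_iff)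
  qed
  also have "\<dots> = (if (apath Q a, z) \<in> P1 Q Z then y (apath Q a, z) else 0)"
  proof -
    have "(apath Q a, z) \<in> P1 Q Z \<Longrightarrow> Tc Q Z (apath Q a) 0 (apath Q a, z) z"
      using P1_iff[of "(apath Q a, z)"] by (auto simp: Tc_def apath_def repl_def prod_eq_iff)
    then show ?thesis by auto
  qed
  finally show ?thesis .
qed

end

definition xD :: "('v, 'a) quiver \<Rightarrow> ('v, 'a) path set \<Rightarrow>
    (('v, 'a, 'k::field) lam \<Rightarrow> ('v, 'a, 'k) lam) \<Rightarrow> ('v, 'a, 'k) pvec" where
  "xD Q Z D = (\<lambda>(q, z). if (q, z) \<in> P1 Q Z then D (dl q) z else 0)"

lemma xD_app: "xD Q Z D (q, z) = (if (q, z) \<in> P1 Q Z then D (dl q) z else 0)"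
  by (simp add: xD_def)

lemma vzero_app[simp]: "vzero u = 0" by (simp add: vzero_def)

context MA begin

lemma CIdl:
  assumes pB: "p0 \<in> B" and qB: "q0 \<in> B" and c: "pt Q q0 = fst p0" and zB: "z \<in> B"
  shows "lam_mult Q Z (\<lambda>z. dc Q Z y p0 z) (dl q0) z + lam_mult Q Z (dl p0) (\<lambda>z. dc Q Z y q0 z) z
       = dc Q Z y (cat q0 p0) z"
proof -
  have "lam_mult Q Z (\<lambda>z. dc Q Z y p0 z) (dl q0) z = (\<Sum>p\<in>B. if fst p = pt Q q0 \<and> cat q0 p = z then dc Q Z y p0 p else 0)"
    unfolding LM1[OF qB] using zB by (simp add: eq_commute)
  moreover have "lam_mult Q Z (dl p0) (\<lambda>z. dc Q Z y q0 z) z = (\<Sum>q\<in>B. if pt Q q = fst p0 \<and> cat q p0 = z then dc Q Z y q0 q else 0)"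
    unfolding LM2[OF pB] using zB by simp
  ultimately show ?thesis using CI[OF B_vp[OF qB] c zB, of y] by simp
qed

lemma verts_src: "a \<in> arrs Q \<Longrightarrow> src Q a \<in> verts Q" using fq by (simp add: finite_quiver_def)
lemma verts_tgt: "a \<in> arrs Q \<Longrightarrow> tgt Q a \<in> verts Q" using fq by (simp add: finite_quiver_def)

lemma G1:
  assumes D: "D \<in> Der Q Z" and vz: "\<And>v. v \<in> verts Q \<Longrightarrow> D (dl (v, [])) = vzero" and a: "a \<in> arrs Q"
  shows "D (dl (apath Q a)) z = (if (apath Q a, z) \<in> P1 Q Z then D (dl (apath Q a)) z else 0)"
proof -
  let ?t = "tgt Q a" and ?s = "src Q a" and ?A = "dl (apath Q a)"
  have t: "?t \<in> verts Q" and s: "?s \<in> verts Q" using verts_src[OF a] verts_tgt[OF a] by auto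
  have AL: "?A \<in> Lam Q Z" by (rule dl_Lam[OF arr_B[OF a]])
  have tL: "dl (?t, []) \<in> Lam Q Z" by (rule dl_Lam[OF vert_B[OF t]])
  have sL: "dl (?s, []) \<in> Lam Q Z" by (rule dl_Lam[OF vert_B[OF s]])
  have e1: "lam_mult Q Z (dl (?t, [])) ?A = ?A"
    using prod_dl[OF vert_B[OF t] arr_B[OF a]] arr_B[OF a] by (simp add: cat_def apath_def pt_def)
  have e2: "lam_mult Q Z ?A (dl (?s, [])) = ?A"
    using prod_dl[OF arr_B[OF a] vert_B[OF s]] arr_B[OF a] by (simp add: cat_def apath_def pt_def)
  have "D ?A = D (lam_mult Q Z (dl (?t, [])) ?A)" by (simp only: e1)
  also have "\<dots> = vadd (lam_mult Q Z (D (dl (?t, []))) ?A) (lam_mult Q Z (dl (?t, [])) (D ?A))"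
    by (rule DerD(5)[OF D tL AL])
  finally have F: "D ?A = vadd (lam_mult Q Z (D (dl (?t, []))) ?A) (lam_mult Q Z (dl (?t, [])) (D ?A))" .
  have R: "vadd (lam_mult Q Z (D (dl (?t, []))) ?A) (lam_mult Q Z (dl (?t, [])) (D ?A)) z = (if z \<in> B \<and> pt Q z = ?t then D ?A z else 0)"
    by (simp add: vz[OF t] vadd_def lam_mult_zero1 LMv2[OF t])
  have 1: "D ?A z = (if z \<in> B \<and> pt Q z = ?t then D ?A z else 0)"
    using fun_cong[OF F, of z] R by (rule trans)
  have "D ?A = D (lam_mult Q Z ?A (dl (?s, [])))" by (simp only: e2)
  also have "\<dots> = vadd (lam_mult Q Z (D ?A) (dl (?s, []))) (lam_mult Q Z ?A (D (dl (?s, []))))"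
    by (rule DerD(5)[OF D AL sL])
  finally have F2: "D ?A = vadd (lam_mult Q Z (D ?A) (dl (?s, []))) (lam_mult Q Z ?A (D (dl (?s, []))))" .
  have R2: "vadd (lam_mult Q Z (D ?A) (dl (?s, []))) (lam_mult Q Z ?A (D (dl (?s, [])))) z = (if z \<in> B \<and> fst z = ?s then D ?A z else 0)"
    by (simp add: vz[OF s] vadd_def lam_mult_zero2 LMv1[OF s])
  have 2: "D ?A z = (if z \<in> B \<and> fst z = ?s then D ?A z else 0)"
    using fun_cong[OF F2, of z] R2 by (rule trans)
  show ?thesis
  proof (cases "D ?A z = 0")
    case False
    then have "z \<in> B" "pt Q z = ?t" "fst z = ?s" using 1 2 by (auto split: if_splits)
    then have "(apath Q a, z) \<in> P1 Q Z" using P1_iff[of "(apath Q a, z)"] a by auto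
    then show ?thesis by simp
  qed simp
qed

lemma G2:
  assumes D: "D \<in> Der Q Z" and vz: "\<And>v. v \<in> verts Q \<Longrightarrow> D (dl (v, [])) = vzero"
  shows "w \<in> B \<Longrightarrow> D (dl w) = (\<lambda>z. dc Q Z (xD Q Z D) w z)"
proof (induction "length (snd w)" arbitrary: w)
  case 0
  then obtain v where w: "w = (v, [])" by (cases w) auto
  have "v \<in> verts Q" using vp_verts[OF B_vp[OF 0(2)]] w by simp
  then have "D (dl w) = vzero" using vz w by simp
  moreover have "(\<lambda>z. dc Q Z (xD Q Z D) w z) = vzero"
  proof
    fix z show "dc Q Z (xD Q Z D) w z = vzero z" using dc_vert[of "xD Q Z D" v z] w by simp
  qed
  ultimately show ?case by simp
next
  case (Suc n)
  then obtain a rest where ar: "snd w = a # rest" by (cases "snd w") auto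
  have vw: "vp Q (fst w) (snd w)" using B_vp[OF Suc(3)] .
  then have a: "a \<in> arrs Q" "src Q a = fst w" using ar by auto
  define q0 where "q0 = apath Q a"
  define p0 where "p0 = (tgt Q a, rest)"
  have wc: "w = cat q0 p0" using ar a by (simp add: q0_def p0_def cat_def apath_def prod_eq_iff)
  have c: "pt Q q0 = fst p0" by (simp add: q0_def p0_def apath_def)
  have qp: "q0 \<in> B \<and> p0 \<in> B" using cat_B[OF _ c] Suc(3) wc by simp
  have n: "n = length (snd p0)" using Suc(2) ar by (simp add: p0_def)
  have IH: "D (dl p0) = (\<lambda>z. dc Q Z (xD Q Z D) p0 z)" using Suc(1)[OF n] qp by simp
  have AR: "D (dl q0) = (\<lambda>z. dc Q Z (xD Q Z D) q0 z)"
  proof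
    fix z
    show "D (dl q0) z = dc Q Z (xD Q Z D) q0 z"
    proof -
      have "dc Q Z (xD Q Z D) q0 z = (if (apath Q a, z) \<in> P1 Q Z then xD Q Z D (apath Q a, z) else 0)"
        unfolding q0_def by (rule DCA[OF a(1)])
      also have "\<dots> = (if (apath Q a, z) \<in> P1 Q Z then D (dl (apath Q a)) z else 0)"
        by (simp add: xD_app)
      also have "\<dots> = D (dl q0) z"
        unfolding q0_def by (rule G1[OF D vz a(1), of z, symmetric])
      finally show ?thesis by simp
    qed
  qed
  have prod: "D (dl w) = D (lam_mult Q Z (dl p0) (dl q0))"
    using qp c Suc(3) wc by (simp add: prod_dl)
  have "D (dl w) = vadd (lam_mult Q Z (D (dl p0)) (dl q0)) (lam_mult Q Z (dl p0) (D (dl q0)))"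
    unfolding prod using DerD(5)[OF D dl_Lam dl_Lam] qp by simp
  also have "\<dots> = (\<lambda>z. dc Q Z (xD Q Z D) w z)"
  proof
    fix z
    show "vadd (lam_mult Q Z (D (dl p0)) (dl q0)) (lam_mult Q Z (dl p0) (D (dl q0))) z = dc Q Z (xD Q Z D) w z"
    proof (cases "z \<in> B")
      case True
      then show ?thesis unfolding IH AR vadd_def wc using CIdl[of p0 q0 z] qp c by simp
    next
      case False
      then show ?thesis by (simp add: vadd_def lam_mult_eq dc_notB)
    qed
  qed
  finally show ?case .
qed

end

context MA begin

lemma Z_split:
  assumes p: "p \<in> Z"
  obtains a rest where "a \<in> arrs Q" "p = cat (apath Q a) (tgt Q a, rest)" "apath Q a \<in> B" "(tgt Q a, rest) \<in> B"
    "pt Q (apath Q a) = fst (tgt Q a, rest)" "p \<notin> B"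
proof -
  have vp: "vp Q (fst p) (snd p)" by (rule Z_vp[OF p])
  have len: "length (snd p) \<ge> 2" by (rule Z_len[OF p])
  then obtain a rest where ar: "snd p = a # rest" by (cases "snd p") auto
  have a: "a \<in> arrs Q" "src Q a = fst p" "vp Q (tgt Q a) rest" using vp ar by auto
  have pc: "p = cat (apath Q a) (tgt Q a, rest)" using ar a by (simp add: cat_def apath_def prod_eq_iff)
  have nosub: "\<not> subpath Q g (tgt Q a, rest)" if g: "g \<in> Z" for g
  proof
    assume sg: "subpath Q g (tgt Q a, rest)"
    then obtain xs ys where xy: "rest = xs @ snd g @ ys" unfolding subpath_def by auto
    have sp: "subpath Q g (fst p, [a] @ rest)"
      by (rule sub_suf) (use sg a in simp)
    have pe: "(fst p, [a] @ rest) = p" using ar by (simp add: prod_eq_iff)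
    from sp have "subpath Q g p" by (simp only: pe)
    then have "g = p" using mr g p unfolding monomial_relations_def by blast
    then show False using xy ar by simp
  qed
  have rB: "(tgt Q a, rest) \<in> B" using B_iff a(3) nosub by auto
  have "subpath Q p (fst p, [] @ snd p @ [])" by (rule sub_mid) simp
  then have "p \<notin> B" using B_iff p by auto
  then show ?thesis using that[OF a(1) pc arr_B[OF a(1)] rB] by (simp add: apath_def)
qed

lemma G3:
  assumes D: "D \<in> Der Q Z" and vz: "\<And>v. v \<in> verts Q \<Longrightarrow> D (dl (v, [])) = vzero"
  shows "xD Q Z D \<in> Ker1 Q Z"
proof -
  have vec: "xD Q Z D \<in> vecs (P1 Q Z)" by (auto simp: vecs_def xD_def)
  have "psi1 Q Z (xD Q Z D) (p, z) = 0" for p z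
  proof (cases "p \<in> Z")
    case False then show ?thesis by (simp add: psi1_def)
  next
    case True
    obtain a rest where a: "a \<in> arrs Q" "p = cat (apath Q a) (tgt Q a, rest)" "apath Q a \<in> B"
      "(tgt Q a, rest) \<in> B" "pt Q (apath Q a) = fst (tgt Q a, rest)" "p \<notin> B"
      by (rule Z_split[OF True])
    define q0 where "q0 = apath Q a"
    define p0 where "p0 = (tgt Q a, rest)"
    have qB: "q0 \<in> B" and pB: "p0 \<in> B" and c: "pt Q q0 = fst p0" and pc: "p = cat q0 p0"
      using a by (simp_all add: q0_def p0_def)
    have "D (lam_mult Q Z (dl p0) (dl q0)) = D vzero"
      using c pc a(6) by (simp add: prod_dl[OF pB qB])
    also have "\<dots> = vzero" by (rule Der_zero[OF D])
    finally have "vadd (lam_mult Q Z (D (dl p0)) (dl q0)) (lam_mult Q Z (dl p0) (D (dl q0))) = vzero"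
      using DerD(5)[OF D dl_Lam[OF pB] dl_Lam[OF qB]] by simp
    then have 0: "vadd (lam_mult Q Z (\<lambda>z. dc Q Z (xD Q Z D) p0 z) (dl q0)) (lam_mult Q Z (dl p0) (\<lambda>z. dc Q Z (xD Q Z D) q0 z)) = vzero"
      by (simp only: G2[OF D vz pB] G2[OF D vz qB])
    show ?thesis
    proof (cases "z \<in> B")
      case zB: True
      have "dc Q Z (xD Q Z D) p z = 0"
        using fun_cong[OF 0, of z] CIdl[OF pB qB c zB, of "xD Q Z D"] pc by (simp add: vadd_def)
      then show ?thesis using True by (simp add: psi1_def dc_def)
    next
      case False then show ?thesis using True dc_notB[OF False, of "xD Q Z D" p] by (simp add: psi1_dc)
    qed
  qed
  then have "psi1 Q Z (xD Q Z D) = vzero" by (auto simp: fun_eq_iff)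
  then show ?thesis using vec by (simp add: Ker1_def)
qed

lemma G4:
  assumes D: "D \<in> Der Q Z" and vz: "\<And>v. v \<in> verts Q \<Longrightarrow> D (dl (v, [])) = vzero"
  shows "Phi Q Z (xD Q Z D) = D"
proof
  fix f
  show "Phi Q Z (xD Q Z D) f = D f"
  proof (cases "f \<in> Lam Q Z")
    case True
    have "Phi Q Z (xD Q Z D) f = (\<lambda>z. \<Sum>w\<in>B. f w * dc Q Z (xD Q Z D) w z)"
      using True by (simp add: Phi_def)
    also have "\<dots> = (\<lambda>z. \<Sum>w\<in>B. f w * D (dl w) z)"
      by (rule ext, rule sum.cong[OF refl]) (simp add: G2[OF D vz])
    also have "\<dots> = D f" using Der_expand[OF D True] by simp
    finally show ?thesis .
  next
    case False then show ?thesis using DerD(2)[OF D False] by (simp add: Phi_def)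
  qed
qed

lemma GEN:
  assumes D: "D \<in> Der Q Z" and vz: "\<And>v. v \<in> verts Q \<Longrightarrow> D (dl (v, [])) = vzero"
  shows "xD Q Z D \<in> Ker1 Q Z \<and> Phi Q Z (xD Q Z D) = D"
  using G3[OF D vz] G4[OF D vz] by simp

lemma Ker1_psi: "x \<in> Ker1 Q Z \<Longrightarrow> psi1 Q Z x = vzero"
  by (simp add: Ker1_def)

lemma xD_Phi: assumes x: "x \<in> vecs (P1 Q Z)" shows "xD Q Z (Phi Q Z x) = x"
proof (rule ext)
  fix u :: "('v, 'a) path \<times> ('v, 'a) path"
  obtain q z where u: "u = (q, z)" by (cases u)
  show "xD Q Z (Phi Q Z x) u = x u"
  proof (cases "u \<in> P1 Q Z")
    case False
    have "x u = 0" using x False unfolding vecs_def by blast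
    then show ?thesis using False u by (simp add: xD_def)
  next
    case True
    then obtain a where a: "a \<in> arrs Q" "q = apath Q a" using P1_iff u by auto
    have "xD Q Z (Phi Q Z x) u = Phi Q Z x (dl q) z" using True u by (simp add: xD_def)
    also have "\<dots> = (\<Sum>w\<in>B. dl q w * dc Q Z x w z)" by (rule Phi_app[OF dl_Lam[OF arr_B[OF a(1)]], unfolded a(2)[symmetric]])
    also have "\<dots> = dc Q Z x q z"
    proof -
      have "(\<Sum>w\<in>B. dl q w * dc Q Z x w z) = (\<Sum>w\<in>B. if w = q then dc Q Z x w z else 0)"
        by (rule sum.cong) (auto simp: dl_def)
      then show ?thesis using arr_B[OF a(1)] a(2) fB by simp
    qed
    also have "\<dots> = x u" using DCA[OF a(1), of x z] True u a(2) by simp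
    finally show ?thesis .
  qed
qed

end

definition adj :: "('v, 'a) quiver \<Rightarrow> ('v, 'a) path set \<Rightarrow> ('v, 'a, 'k::field) lam \<Rightarrow>
   ('v, 'a, 'k) lam \<Rightarrow> ('v, 'a, 'k) lam" where
  "adj Q Z a = (\<lambda>x. if x \<in> Lam Q Z then vsub (lam_mult Q Z a x) (lam_mult Q Z x a) else vzero)"

lemma Ad_iff: "F \<in> Ad Q Z \<longleftrightarrow> (\<exists>a\<in>Lam Q Z. F = adj Q Z a)"
  unfolding Ad_def adj_def by blast

lemma lam_mult_eq2: "lam_mult Q Z f g z =
   (\<Sum>p\<in>Bset Q Z. \<Sum>q\<in>Bset Q Z. if z \<in> Bset Q Z \<and> pt Q q = fst p \<and> cat q p = z then f p * g q else 0)"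
  by (simp add: lam_mult_eq)

lemma lm_add1: "lam_mult Q Z (vadd f g) h = vadd (lam_mult Q Z f h) (lam_mult Q Z g h)"
  by (rule ext) (simp add: lam_mult_eq2 vadd_def sum.distrib[symmetric] distrib_right if_distrib cong: if_cong)

lemma lm_add2: "lam_mult Q Z f (vadd g h) = vadd (lam_mult Q Z f g) (lam_mult Q Z f h)"
  by (rule ext) (simp add: lam_mult_eq2 vadd_def sum.distrib[symmetric] distrib_left if_distrib cong: if_cong)

lemma lm_sub1: "lam_mult Q Z (vsub f g) h = vsub (lam_mult Q Z f h) (lam_mult Q Z g h)"
  by (rule ext) (simp add: lam_mult_eq2 vsub_def sum_subtractf[symmetric] left_diff_distrib if_distrib cong: if_cong)

lemma lm_sub2: "lam_mult Q Z f (vsub g h) = vsub (lam_mult Q Z f g) (lam_mult Q Z f h)"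
  by (rule ext) (simp add: lam_mult_eq2 vsub_def sum_subtractf[symmetric] right_diff_distrib if_distrib cong: if_cong)

lemma lm_scale1: "lam_mult Q Z (vscale c f) h = vscale c (lam_mult Q Z f h)"
  by (rule ext) (simp add: lam_mult_eq2 vscale_def sum_distrib_left mult.assoc if_distrib cong: if_cong)

lemma lm_scale2: "lam_mult Q Z f (vscale c h) = vscale c (lam_mult Q Z f h)"
  by (rule ext) (simp add: lam_mult_eq2 vscale_def sum_distrib_left mult_ac if_distrib cong: if_cong)

context MA begin

lemma lm_assoc: "lam_mult Q Z (lam_mult Q Z f g) h = lam_mult Q Z f (lam_mult Q Z g h)"
proof
  fix z
  show "lam_mult Q Z (lam_mult Q Z f g) h z = lam_mult Q Z f (lam_mult Q Z g h) z"
  proof (cases "z \<in> B")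
    case False then show ?thesis by (simp add: lam_mult_eq)
  next
    case zB: True
    define K where "K = (\<lambda>p r p1 q1. if (pt Q r = fst p \<and> cat r p = z) \<and> (pt Q q1 = fst p1 \<and> cat q1 p1 = p)
        then f p1 * g q1 * h r else 0)"
    define L where "L = (\<lambda>p1 q r q1. if (pt Q q = fst p1 \<and> cat q p1 = z) \<and> (pt Q r = fst q1 \<and> cat r q1 = q)
        then f p1 * g q1 * h r else 0)"
    have "lam_mult Q Z (lam_mult Q Z f g) h z = (\<Sum>p\<in>B. \<Sum>r\<in>B. \<Sum>p1\<in>B. \<Sum>q1\<in>B. K p r p1 q1)"
    proof -
      have "lam_mult Q Z (lam_mult Q Z f g) h z = (\<Sum>p\<in>B. \<Sum>r\<in>B. if pt Q r = fst p \<and> cat r p = z then lam_mult Q Z f g p * h r else 0)"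
        using zB by (simp add: lam_mult_eq)
      also have "\<dots> = (\<Sum>p\<in>B. \<Sum>r\<in>B. \<Sum>p1\<in>B. \<Sum>q1\<in>B. K p r p1 q1)"
      proof (rule sum.cong[OF refl], rule sum.cong[OF refl])
        fix p r assume pB: "p \<in> B"
        show "(if pt Q r = fst p \<and> cat r p = z then lam_mult Q Z f g p * h r else 0) = (\<Sum>p1\<in>B. \<Sum>q1\<in>B. K p r p1 q1)"
        proof (cases "pt Q r = fst p \<and> cat r p = z")
          case True
          then show ?thesis using pB
            by (simp add: K_def lam_mult_eq sum_distrib_right if_mult_0 cong: if_cong)
        next
          case False
          then show ?thesis by (simp only: K_def if_not_P[OF False] if_False simp_thms sum.neutral_const)
        qed
      qed
      finally show ?thesis .
    qed
    also have "\<dots> = (\<Sum>r\<in>B. \<Sum>p1\<in>B. \<Sum>q1\<in>B. \<Sum>p\<in>B. K p r p1 q1)"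
    proof -
      have "(\<Sum>p\<in>B. \<Sum>r\<in>B. \<Sum>p1\<in>B. \<Sum>q1\<in>B. K p r p1 q1) = (\<Sum>r\<in>B. \<Sum>p\<in>B. \<Sum>p1\<in>B. \<Sum>q1\<in>B. K p r p1 q1)"
        by (rule sum.swap)
      also have "\<dots> = (\<Sum>r\<in>B. \<Sum>p1\<in>B. \<Sum>p\<in>B. \<Sum>q1\<in>B. K p r p1 q1)"
        by (rule sum.cong[OF refl], rule sum.swap)
      also have "\<dots> = (\<Sum>r\<in>B. \<Sum>p1\<in>B. \<Sum>q1\<in>B. \<Sum>p\<in>B. K p r p1 q1)"
        by (rule sum.cong[OF refl], rule sum.cong[OF refl], rule sum.swap)
      finally show ?thesis .
    qed
    also have "\<dots> = (\<Sum>r\<in>B. \<Sum>p1\<in>B. \<Sum>q1\<in>B. if pt Q r = fst q1 \<and> pt Q q1 = fst p1 \<and> cat r (cat q1 p1) = z then f p1 * g q1 * h r else 0)"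
    proof (rule sum.cong[OF refl], rule sum.cong[OF refl], rule sum.cong[OF refl])
      fix r p1 q1 assume rB: "r \<in> B"
      have "(\<Sum>p\<in>B. K p r p1 q1) = (if cat q1 p1 \<in> B \<and> ((pt Q r = fst (cat q1 p1) \<and> cat r (cat q1 p1) = z) \<and> (pt Q q1 = fst p1 \<and> cat q1 p1 = cat q1 p1)) then f p1 * g q1 * h r else 0)"
        unfolding K_def by (rule sum_single2[OF fB]) simp
      also have "\<dots> = (if pt Q r = fst q1 \<and> pt Q q1 = fst p1 \<and> cat r (cat q1 p1) = z then f p1 * g q1 * h r else 0)"
      proof -
        have "cat r (cat q1 p1) = z \<Longrightarrow> pt Q r = fst q1 \<Longrightarrow> cat q1 p1 \<in> B"
        proof -
          assume h: "cat r (cat q1 p1) = z" "pt Q r = fst q1"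
          then have "(fst r, snd r @ snd (cat q1 p1)) \<in> B" using zB by (simp add: cat_def)
          then have "(pt Q (fst r, snd r), snd (cat q1 p1)) \<in> B" by (rule B_suf)
          then show "cat q1 p1 \<in> B" using h(2) by (simp add: cat_def)
        qed
        then show ?thesis by (auto simp: cat_def)
      qed
      finally show "(\<Sum>p\<in>B. K p r p1 q1) = (if pt Q r = fst q1 \<and> pt Q q1 = fst p1 \<and> cat r (cat q1 p1) = z then f p1 * g q1 * h r else 0)" .
    qed
    also have "\<dots> = (\<Sum>p1\<in>B. \<Sum>q1\<in>B. \<Sum>r\<in>B. if pt Q r = fst q1 \<and> pt Q q1 = fst p1 \<and> cat r (cat q1 p1) = z then f p1 * g q1 * h r else 0)"
    proof -
      have "(\<Sum>r\<in>B. \<Sum>p1\<in>B. \<Sum>q1\<in>B. if pt Q r = fst q1 \<and> pt Q q1 = fst p1 \<and> cat r (cat q1 p1) = z then f p1 * g q1 * h r else 0)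
          = (\<Sum>p1\<in>B. \<Sum>r\<in>B. \<Sum>q1\<in>B. if pt Q r = fst q1 \<and> pt Q q1 = fst p1 \<and> cat r (cat q1 p1) = z then f p1 * g q1 * h r else 0)"
        by (rule sum.swap)
      also have "\<dots> = (\<Sum>p1\<in>B. \<Sum>q1\<in>B. \<Sum>r\<in>B. if pt Q r = fst q1 \<and> pt Q q1 = fst p1 \<and> cat r (cat q1 p1) = z then f p1 * g q1 * h r else 0)"
        by (rule sum.cong[OF refl], rule sum.swap)
      finally show ?thesis .
    qed
    also have "\<dots> = (\<Sum>p1\<in>B. \<Sum>q1\<in>B. \<Sum>r\<in>B. \<Sum>q\<in>B. L p1 q r q1)"
    proof (rule sum.cong[OF refl], rule sum.cong[OF refl], rule sum.cong[OF refl])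
      fix p1 q1 r
      have "(\<Sum>q\<in>B. L p1 q r q1) = (if cat r q1 \<in> B \<and> ((pt Q (cat r q1) = fst p1 \<and> cat (cat r q1) p1 = z) \<and> (pt Q r = fst q1 \<and> cat r q1 = cat r q1)) then f p1 * g q1 * h r else 0)"
        unfolding L_def by (rule sum_single2[OF fB]) simp
      also have "\<dots> = (if pt Q r = fst q1 \<and> pt Q q1 = fst p1 \<and> cat r (cat q1 p1) = z then f p1 * g q1 * h r else 0)"
      proof -
        have "cat r (cat q1 p1) = z \<Longrightarrow> cat r q1 \<in> B"
        proof -
          assume h: "cat r (cat q1 p1) = z"
          then have "(fst r, (snd r @ snd q1) @ snd p1) \<in> B" using zB by (simp add: cat_def)
          then have "(fst r, snd r @ snd q1) \<in> B" by (rule B_pre)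
          then show "cat r q1 \<in> B" by (simp add: cat_def)
        qed
        moreover have "pt Q r = fst q1 \<Longrightarrow> pt Q (cat r q1) = pt Q q1" by (rule pt_cat2)
        moreover have "cat (cat r q1) p1 = cat r (cat q1 p1)" by (simp add: cat_def)
        ultimately show ?thesis by auto
      qed
      finally show "(if pt Q r = fst q1 \<and> pt Q q1 = fst p1 \<and> cat r (cat q1 p1) = z then f p1 * g q1 * h r else 0) = (\<Sum>q\<in>B. L p1 q r q1)" by simp
    qed
    also have "\<dots> = (\<Sum>p1\<in>B. \<Sum>q\<in>B. \<Sum>q1\<in>B. \<Sum>r\<in>B. L p1 q r q1)"
    proof -
      have "(\<Sum>p1\<in>B. \<Sum>q1\<in>B. \<Sum>r\<in>B. \<Sum>q\<in>B. L p1 q r q1) = (\<Sum>p1\<in>B. \<Sum>q1\<in>B. \<Sum>q\<in>B. \<Sum>r\<in>B. L p1 q r q1)"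
        by (rule sum.cong[OF refl], rule sum.cong[OF refl], rule sum.swap)
      also have "\<dots> = (\<Sum>p1\<in>B. \<Sum>q\<in>B. \<Sum>q1\<in>B. \<Sum>r\<in>B. L p1 q r q1)"
        by (rule sum.cong[OF refl], rule sum.swap)
      finally show ?thesis .
    qed
    also have "\<dots> = lam_mult Q Z f (lam_mult Q Z g h) z"
    proof -
      have "lam_mult Q Z f (lam_mult Q Z g h) z = (\<Sum>p1\<in>B. \<Sum>q\<in>B. if pt Q q = fst p1 \<and> cat q p1 = z then f p1 * lam_mult Q Z g h q else 0)"
        using zB by (simp add: lam_mult_eq)
      also have "\<dots> = (\<Sum>p1\<in>B. \<Sum>q\<in>B. \<Sum>q1\<in>B. \<Sum>r\<in>B. L p1 q r q1)"
      proof (rule sum.cong[OF refl], rule sum.cong[OF refl])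
        fix p1 q assume qB: "q \<in> B"
        show "(if pt Q q = fst p1 \<and> cat q p1 = z then f p1 * lam_mult Q Z g h q else 0) = (\<Sum>q1\<in>B. \<Sum>r\<in>B. L p1 q r q1)"
        proof (cases "pt Q q = fst p1 \<and> cat q p1 = z")
          case True
          then show ?thesis using qB
            by (simp add: L_def lam_mult_eq sum_distrib_left mult_if_0 mult_ac cong: if_cong)
        next
          case False
          then show ?thesis by (simp only: L_def if_not_P[OF False] if_False simp_thms sum.neutral_const)
        qed
      qed
      finally show ?thesis by simp
    qed
    finally show ?thesis .
  qed
qed

end

lemma Der_sub:
  assumes D: "D \<in> Der Q Z" and x: "x \<in> Lam Q Z" and y: "y \<in> Lam Q Z"
  shows "D (vsub x y) = vsub (D x) (D y)"
proof -
  have e: "vsub x y = vadd x (vscale (-1) y)" by (simp add: vsub_def vadd_def vscale_def fun_eq_iff)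
  have "D (vsub x y) = vadd (D x) (vscale (-1) (D y))"
    unfolding e by (simp add: DerD(3)[OF D x vscale_Lam[OF y]] DerD(4)[OF D y])
  then show ?thesis by (simp add: vsub_def vadd_def vscale_def fun_eq_iff)
qed

lemma Der_msub:
  assumes D1: "D1 \<in> Der Q Z" and D2: "D2 \<in> Der Q Z"
  shows "msub D1 D2 \<in> Der Q Z"
proof (rule DerI)
  show "msub D1 D2 x \<in> Lam Q Z" if "x \<in> Lam Q Z" for x
    unfolding msub_def using that DerD(1)[OF D1] DerD(1)[OF D2] by (simp add: vsub_Lam)
  show "msub D1 D2 x = vzero" if "x \<notin> Lam Q Z" for x
    unfolding msub_def using that DerD(2)[OF D1] DerD(2)[OF D2] by (simp add: vsub_def vzero_def)
  show "msub D1 D2 (vadd x y) = vadd (msub D1 D2 x) (msub D1 D2 y)" if "x \<in> Lam Q Z" "y \<in> Lam Q Z" for x y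
    unfolding msub_def using that DerD(3)[OF D1] DerD(3)[OF D2]
    by (simp add: vsub_def vadd_def fun_eq_iff)
  show "msub D1 D2 (vscale c x) = vscale c (msub D1 D2 x)" if "x \<in> Lam Q Z" for c x
    unfolding msub_def using that DerD(4)[OF D1] DerD(4)[OF D2]
    by (simp add: vsub_def vscale_def fun_eq_iff algebra_simps)
  show "msub D1 D2 (lam_mult Q Z x y) = vadd (lam_mult Q Z (msub D1 D2 x) y) (lam_mult Q Z x (msub D1 D2 y))"
    if "x \<in> Lam Q Z" "y \<in> Lam Q Z" for x y
    unfolding msub_def
    by (simp only: DerD(5)[OF D1 that] DerD(5)[OF D2 that] lm_sub1 lm_sub2)
       (simp add: vsub_def vadd_def fun_eq_iff algebra_simps)
qed

lemma Der_mcomm: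
  assumes D1: "D1 \<in> Der Q Z" and D2: "D2 \<in> Der Q Z"
  shows "mcomm D1 D2 \<in> Der Q Z"
proof (rule DerI)
  show "mcomm D1 D2 x \<in> Lam Q Z" if "x \<in> Lam Q Z" for x
    unfolding mcomm_def using that DerD(1)[OF D1] DerD(1)[OF D2] by (simp add: vsub_Lam)
  show "mcomm D1 D2 x = vzero" if "x \<notin> Lam Q Z" for x
    unfolding mcomm_def using that DerD(2)[OF D1] DerD(2)[OF D2] Der_zero[OF D1] Der_zero[OF D2]
    by (simp add: vsub_def vzero_def)
  show "mcomm D1 D2 (vadd x y) = vadd (mcomm D1 D2 x) (mcomm D1 D2 y)" if x: "x \<in> Lam Q Z" and y: "y \<in> Lam Q Z" for x y
  proof -
    have 1: "D1 (D2 (vadd x y)) = vadd (D1 (D2 x)) (D1 (D2 y))"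
      using DerD(3)[OF D2 x y] DerD(3)[OF D1 DerD(1)[OF D2 x] DerD(1)[OF D2 y]] by simp
    have 2: "D2 (D1 (vadd x y)) = vadd (D2 (D1 x)) (D2 (D1 y))"
      using DerD(3)[OF D1 x y] DerD(3)[OF D2 DerD(1)[OF D1 x] DerD(1)[OF D1 y]] by simp
    show ?thesis unfolding mcomm_def 1 2 by (simp add: vsub_def vadd_def fun_eq_iff)
  qed
  show "mcomm D1 D2 (vscale c x) = vscale c (mcomm D1 D2 x)" if "x \<in> Lam Q Z" for c x
  proof -
    have 1: "D1 (D2 (vscale c x)) = vscale c (D1 (D2 x))"
      using DerD(4)[OF D2 that] DerD(4)[OF D1 DerD(1)[OF D2 that]] by simp
    have 2: "D2 (D1 (vscale c x)) = vscale c (D2 (D1 x))"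
      using DerD(4)[OF D1 that] DerD(4)[OF D2 DerD(1)[OF D1 that]] by simp
    show ?thesis unfolding mcomm_def 1 2 by (simp add: vsub_def vscale_def fun_eq_iff algebra_simps)
  qed
  show "mcomm D1 D2 (lam_mult Q Z x y) = vadd (lam_mult Q Z (mcomm D1 D2 x) y) (lam_mult Q Z x (mcomm D1 D2 y))"
    if x: "x \<in> Lam Q Z" and y: "y \<in> Lam Q Z" for x y
  proof -
    have L1: "D1 x \<in> Lam Q Z" "D1 y \<in> Lam Q Z" "D2 x \<in> Lam Q Z" "D2 y \<in> Lam Q Z"
      using DerD(1)[OF D1] DerD(1)[OF D2] x y by auto
    have a: "D1 (D2 (lam_mult Q Z x y)) = vadd (vadd (lam_mult Q Z (D1 (D2 x)) y) (lam_mult Q Z (D2 x) (D1 y)))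
          (vadd (lam_mult Q Z (D1 x) (D2 y)) (lam_mult Q Z x (D1 (D2 y))))"
      using DerD(5)[OF D2 x y] DerD(3)[OF D1 lam_mult_Lam lam_mult_Lam] DerD(5)[OF D1] L1 x y by simp
    have b: "D2 (D1 (lam_mult Q Z x y)) = vadd (vadd (lam_mult Q Z (D2 (D1 x)) y) (lam_mult Q Z (D1 x) (D2 y)))
          (vadd (lam_mult Q Z (D2 x) (D1 y)) (lam_mult Q Z x (D2 (D1 y))))"
      using DerD(5)[OF D1 x y] DerD(3)[OF D2 lam_mult_Lam lam_mult_Lam] DerD(5)[OF D2] L1 x y by simp
    show ?thesis unfolding mcomm_def a b
      by (simp only: lm_sub1 lm_sub2) (simp add: vsub_def vadd_def fun_eq_iff algebra_simps)
  qed
qed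

lemma adj_Lam_app: "x \<in> Lam Q Z \<Longrightarrow> adj Q Z a x = vsub (lam_mult Q Z a x) (lam_mult Q Z x a)"
  by (simp add: adj_def)

context MA begin

lemma adj_Der: "a \<in> Lam Q Z \<Longrightarrow> adj Q Z a \<in> Der Q Z"
proof (rule DerI)
  show "adj Q Z a x \<in> Lam Q Z" if "x \<in> Lam Q Z" for x
    using that by (simp add: adj_def vsub_Lam lam_mult_Lam)
  show "adj Q Z a x = vzero" if "x \<notin> Lam Q Z" for x
    using that by (simp add: adj_def)
  show "adj Q Z a (vadd x y) = vadd (adj Q Z a x) (adj Q Z a y)" if "x \<in> Lam Q Z" "y \<in> Lam Q Z" for x y
    by (simp only: adj_Lam_app[OF vadd_Lam[OF that]] adj_Lam_app[OF that(1)] adj_Lam_app[OF that(2)] lm_add1 lm_add2)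
       (simp add: vsub_def vadd_def fun_eq_iff)
  show "adj Q Z a (vscale c x) = vscale c (adj Q Z a x)" if "x \<in> Lam Q Z" for c x
    by (simp only: adj_Lam_app[OF vscale_Lam[OF that]] adj_Lam_app[OF that] lm_scale1 lm_scale2)
       (simp add: vsub_def vscale_def fun_eq_iff algebra_simps)
  show "adj Q Z a (lam_mult Q Z x y) = vadd (lam_mult Q Z (adj Q Z a x) y) (lam_mult Q Z x (adj Q Z a y))"
    if "x \<in> Lam Q Z" "y \<in> Lam Q Z" for x y
    by (simp only: adj_Lam_app[OF lam_mult_Lam] adj_Lam_app[OF that(1)] adj_Lam_app[OF that(2)] lm_sub1 lm_sub2 lm_assoc)
       (simp add: vsub_def vadd_def fun_eq_iff)
qed

lemma MCAD:
  assumes D: "D \<in> Der Q Z" and a: "a \<in> Lam Q Z"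
  shows "mcomm D (adj Q Z a) = adj Q Z (D a)"
proof
  fix f
  show "mcomm D (adj Q Z a) f = adj Q Z (D a) f"
  proof (cases "f \<in> Lam Q Z")
    case True
    have Df: "D f \<in> Lam Q Z" by (rule DerD(1)[OF D True])
    have "D (adj Q Z a f) = vsub (D (lam_mult Q Z a f)) (D (lam_mult Q Z f a))"
      unfolding adj_Lam_app[OF True] by (rule Der_sub[OF D lam_mult_Lam lam_mult_Lam])
    then have "D (adj Q Z a f) = vsub (vadd (lam_mult Q Z (D a) f) (lam_mult Q Z a (D f))) (vadd (lam_mult Q Z (D f) a) (lam_mult Q Z f (D a)))"
      using DerD(5)[OF D a True] DerD(5)[OF D True a] by simp
    then show ?thesis unfolding mcomm_def using True Df
      by (simp add: adj_Lam_app vsub_def vadd_def fun_eq_iff)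
  next
    case False
    have "adj Q Z a vzero = vzero"
      by (simp only: adj_Lam_app[OF vzero_Lam] lam_mult_zero1 lam_mult_zero2) (simp add: vsub_def fun_eq_iff)
    note A0 = this
    have 1: "adj Q Z a f = vzero" using False by (simp add: adj_def)
    have 3: "adj Q Z (D a) f = vzero" using False by (simp add: adj_def)
    show ?thesis unfolding mcomm_def 1 3 DerD(2)[OF D False] Der_zero[OF D] A0
      by (simp add: vsub_def fun_eq_iff)
  qed
qed

lemma adj_vert: "a \<in> Lam Q Z \<Longrightarrow> v \<in> verts Q \<Longrightarrow>
   adj Q Z a (dl (v, [])) z = (if z \<in> B \<and> fst z = v then a z else 0) - (if z \<in> B \<and> pt Q z = v then a z else 0)"
  by (simp add: adj_Lam_app[OF dl_Lam[OF vert_B]] vsub_def LMv1 LMv2)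

end

context MA begin

lemma vv_prod: "v \<in> verts Q \<Longrightarrow> w \<in> verts Q \<Longrightarrow>
  lam_mult Q Z (dl (w, [])) (dl (v, [])) = (if v = w then dl (w, []) else vzero)"
  using vert_B[of w] vert_B[of v] by (simp add: prod_dl cat_def)

lemma adj_kill:
  assumes D: "D \<in> Der Q Z" and w: "w \<in> verts Q"
  defines "a \<equiv> (\<lambda>z. if z \<in> B then D (dl (fst z, [])) z else 0)"
  shows "adj Q Z a (dl (w, [])) = D (dl (w, []))"
proof
  fix z
  have aL: "a \<in> Lam Q Z" by (simp add: a_def Lam_iff)
  have wL: "dl (w, []) \<in> Lam Q Z" by (rule dl_Lam[OF vert_B[OF w]])
  show "adj Q Z a (dl (w, [])) z = D (dl (w, [])) z"
  proof (cases "z \<in> B")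
    case False
    have "D (dl (w, [])) z = 0" using DerD(1)[OF D wL] False unfolding Lam_def vecs_def by blast
    then show ?thesis using adj_vert[OF aL w, of z] False by simp
  next
    case zB: True
    have fz: "fst z \<in> verts Q" using vp_verts[OF B_vp[OF zB]] .
    have az: "a z = D (dl (fst z, [])) z" using zB by (simp add: a_def)
    have i: "D (dl (w, [])) z = (if fst z = w then D (dl (w, [])) z else 0) + (if pt Q z = w then D (dl (w, [])) z else 0)"
    proof -
      have "D (dl (w, [])) = D (lam_mult Q Z (dl (w, [])) (dl (w, [])))" by (simp add: vv_prod[OF w w])
      also have "\<dots> = vadd (lam_mult Q Z (D (dl (w, []))) (dl (w, []))) (lam_mult Q Z (dl (w, [])) (D (dl (w, []))))"
        by (rule DerD(5)[OF D wL wL])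
      finally have "D (dl (w, [])) z = vadd (lam_mult Q Z (D (dl (w, []))) (dl (w, []))) (lam_mult Q Z (dl (w, [])) (D (dl (w, [])))) z"
        by simp
      then show ?thesis using zB by (simp add: vadd_def LMv1[OF w] LMv2[OF w])
    qed
    have ii: "0 = (if fst z = v then D (dl (w, [])) z else 0) + (if pt Q z = w then D (dl (v, [])) z else 0)"
      if v: "v \<in> verts Q" "v \<noteq> w" for v
    proof -
      have vL: "dl (v, []) \<in> Lam Q Z" by (rule dl_Lam[OF vert_B[OF v(1)]])
      have "vzero = D (lam_mult Q Z (dl (w, [])) (dl (v, [])))" using v by (simp add: vv_prod[OF v(1) w] Der_zero[OF D])
      also have "\<dots> = vadd (lam_mult Q Z (D (dl (w, []))) (dl (v, []))) (lam_mult Q Z (dl (w, [])) (D (dl (v, []))))"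
        by (rule DerD(5)[OF D wL vL])
      finally have "vzero z = vadd (lam_mult Q Z (D (dl (w, []))) (dl (v, []))) (lam_mult Q Z (dl (w, [])) (D (dl (v, [])))) z"
        by simp
      then show ?thesis using zB by (simp add: vadd_def LMv1[OF v(1)] LMv2[OF w])
    qed
    have lhs: "adj Q Z a (dl (w, [])) z = (if fst z = w then a z else 0) - (if pt Q z = w then a z else 0)"
      using adj_vert[OF aL w, of z] zB by simp
    show ?thesis
    proof (cases "fst z = w")
      case True
      show ?thesis
      proof (cases "pt Q z = w")
        case pT: True
        have "D (dl (w, [])) z = D (dl (w, [])) z + D (dl (w, [])) z" using i True pT by simp
        then have "D (dl (w, [])) z = 0" by (metis add_cancel_left_right)
        then show ?thesis using lhs True pT by simp
      next
        case False
        then show ?thesis using lhs i az True by simp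
      qed
    next
      case F: False
      show ?thesis
      proof (cases "pt Q z = w")
        case True
        have "0 = D (dl (w, [])) z + D (dl (fst z, [])) z" using ii[OF fz F] True by simp
        then have e1: "D (dl (w, [])) z = - D (dl (fst z, [])) z" by (simp add: eq_neg_iff_add_eq_0)
        have e2: "adj Q Z a (dl (w, [])) z = - D (dl (fst z, [])) z" using lhs az F True by simp
        show ?thesis using e1 e2 by simp
      next
        case False
        then show ?thesis using lhs i F by simp
      qed
    qed
  qed
qed

lemma SURJ:
  assumes D: "D \<in> Der Q Z"
  shows "\<exists>x\<in>Ker1 Q Z. msub (Phi Q Z x) D \<in> Ad Q Z"
proof -
  define a where "a = (\<lambda>z. if z \<in> B then D (dl (fst z, [])) z else 0)"
  have aL: "a \<in> Lam Q Z" by (simp add: a_def Lam_iff)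
  define D' where "D' = msub D (adj Q Z a)"
  have D'D: "D' \<in> Der Q Z" unfolding D'_def by (rule Der_msub[OF D adj_Der[OF aL]])
  have vz: "D' (dl (v, [])) = vzero" if "v \<in> verts Q" for v
    unfolding D'_def msub_def using adj_kill[OF D that] by (simp add: a_def vsub_def fun_eq_iff)
  obtain x where x: "x \<in> Ker1 Q Z" "Phi Q Z x = D'" using GEN[OF D'D vz] by blast
  have "msub (Phi Q Z x) D = adj Q Z (vscale (-1) a)"
  proof
    fix f
    show "msub (Phi Q Z x) D f = adj Q Z (vscale (-1) a) f"
    proof (cases "f \<in> Lam Q Z")
      case True
      show ?thesis unfolding x(2) D'_def msub_def adj_Lam_app[OF True] lm_scale1 lm_scale2
        by (simp add: vsub_def vscale_def fun_eq_iff)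
    next
      case False
      have 1: "adj Q Z a f = vzero" "adj Q Z (vscale (-1) a) f = vzero" using False by (simp_all add: adj_def)
      show ?thesis unfolding x(2) D'_def msub_def 1 DerD(2)[OF D False]
        by (simp add: vsub_def fun_eq_iff)
    qed
  qed
  then have "msub (Phi Q Z x) D \<in> Ad Q Z" using vscale_Lam[OF aL] Ad_iff by blast
  then show ?thesis using x(1) by blast
qed

end

definition yof :: "('v, 'a) quiver \<Rightarrow> ('v, 'a) path set \<Rightarrow> ('v, 'a, 'k::field) lam \<Rightarrow> ('v, 'a, 'k) pvec" where
  "yof Q Z a = (\<lambda>u. if u \<in> P0 Q Z then - a (snd u) else 0)"

context MA begin

lemma adj_vz_cyc:
  assumes aL: "a \<in> Lam Q Z" and cyc: "\<And>z. a z \<noteq> 0 \<Longrightarrow> fst z = pt Q z" and v: "v \<in> verts Q"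
  shows "adj Q Z a (dl (v, [])) = vzero"
proof
  fix z
  show "adj Q Z a (dl (v, [])) z = vzero z"
  proof (cases "a z = 0")
    case True then show ?thesis using adj_vert[OF aL v, of z] by simp
  next
    case False then show ?thesis using adj_vert[OF aL v, of z] cyc[OF False] by simp
  qed
qed

lemma cyc_of_adj:
  assumes aL: "a \<in> Lam Q Z" and vz: "\<And>v. v \<in> verts Q \<Longrightarrow> adj Q Z a (dl (v, [])) = vzero"
    and az: "a z \<noteq> 0"
  shows "fst z = pt Q z"
proof -
  have zB: "z \<in> B" using aL az unfolding Lam_def vecs_def by blast
  have v: "fst z \<in> verts Q" using vp_verts[OF B_vp[OF zB]] .
  have "adj Q Z a (dl (fst z, [])) z = 0" using vz[OF v] by simp
  then have "a z - (if pt Q z = fst z then a z else 0) = 0" using adj_vert[OF aL v, of z] zB by simp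
  then show ?thesis using az by (cases "pt Q z = fst z") auto
qed

lemma P0_reindex: "(\<Sum>u\<in>P0 Q Z. F u) = (\<Sum>c\<in>B. if fst c = pt Q c then F ((fst c, []), c) else 0)"
proof -
  have im: "P0 Q Z = (\<lambda>c. ((fst c, []), c)) ` {c \<in> B. fst c = pt Q c}"
  proof
    show "P0 Q Z \<subseteq> (\<lambda>c. ((fst c, []), c)) ` {c \<in> B. fst c = pt Q c}"
    proof
      fix u assume "u \<in> P0 Q Z"
      then have h: "snd u \<in> B" "fst (snd u) = pt Q (snd u)" "fst u = (fst (snd u), [])" using P0_iff by auto
      then have "u = (\<lambda>c. ((fst c, []), c)) (snd u)" by (simp add: prod_eq_iff)
      then show "u \<in> (\<lambda>c. ((fst c, []), c)) ` {c \<in> B. fst c = pt Q c}" using h by blast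
    qed
    show "(\<lambda>c. ((fst c, []), c)) ` {c \<in> B. fst c = pt Q c} \<subseteq> P0 Q Z"
      using P0_iff by auto
  qed
  have inj: "inj_on (\<lambda>c. ((fst c, []), c)) {c \<in> B. fst c = pt Q c}" by (rule inj_onI) simp
  have "(\<Sum>u\<in>P0 Q Z. F u) = (\<Sum>c\<in>{c \<in> B. fst c = pt Q c}. F ((fst c, []), c))"
    unfolding im by (rule sum.reindex[OF inj, unfolded comp_def])
  also have "\<dots> = (\<Sum>c\<in>B. if fst c = pt Q c then F ((fst c, []), c) else 0)"
    by (rule sum.inter_filter[OF fB])
  finally show ?thesis .
qed

lemma apath_inj: "apath Q a = apath Q a' \<longleftrightarrow> a = a'"
  by (auto simp: apath_def)

lemma psi0_b_eval:
  assumes a: "a \<in> arrs Q"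
  shows "psi0_b Q Z ((fst c, []), c) (apath Q a, z) =
     (if src Q a = fst c \<and> z = (fst c, snd c @ [a]) \<and> z \<in> B then 1 else 0)
   - (if tgt Q a = fst c \<and> z = (src Q a, a # snd c) \<and> z \<in> B then 1 else 0)"
  using a by (simp add: psi0_b_def apath_inj)

lemma psi0_b_P1:
  assumes u: "u \<in> P0 Q Z" and nz: "psi0_b Q Z u (q, z) \<noteq> (0::'k::field)"
  shows "(q, z) \<in> P1 Q Z"
proof -
  have h: "snd u \<in> B" "fst (snd u) = pt Q (snd u)" "fst u = (fst (snd u), [])" using u P0_iff by auto
  let ?c = "snd u"
  have "(\<exists>a\<in>arrs Q. q = apath Q a \<and> src Q a = fst (fst u) \<and> z = (fst ?c, snd ?c @ [a]) \<and> z \<in> B)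
      \<or> (\<exists>a\<in>arrs Q. q = apath Q a \<and> tgt Q a = fst (fst u) \<and> z = (src Q a, a # snd ?c) \<and> z \<in> B)"
    using nz by (simp add: psi0_b_def split: if_splits)
  then show ?thesis
  proof
    assume "\<exists>a\<in>arrs Q. q = apath Q a \<and> src Q a = fst (fst u) \<and> z = (fst ?c, snd ?c @ [a]) \<and> z \<in> B"
    then obtain a where a: "a \<in> arrs Q" "q = apath Q a" "src Q a = fst ?c" "z = (fst ?c, snd ?c @ [a])" "z \<in> B"
      using h by auto
    have "pt Q z = tgt Q a" using a(4) by (simp add: pt_append)
    then show ?thesis using P1_iff[of "(q, z)"] a by auto
  next
    assume "\<exists>a\<in>arrs Q. q = apath Q a \<and> tgt Q a = fst (fst u) \<and> z = (src Q a, a # snd ?c) \<and> z \<in> B"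
    then obtain a where a: "a \<in> arrs Q" "q = apath Q a" "tgt Q a = fst ?c" "z = (src Q a, a # snd ?c)" "z \<in> B"
      using h by auto
    have "pt Q z = pt Q (fst ?c, snd ?c)" using a(3,4) by simp
    also have "\<dots> = pt Q ?c" by (simp only: prod.collapse)
    also have "\<dots> = tgt Q a" using h(2) a(3) by simp
    finally show ?thesis using P1_iff[of "(q, z)"] a by auto
  qed
qed

lemma CMP0:
  fixes a :: "('v, 'a, 'k::field) lam"
  assumes aL: "a \<in> Lam Q Z" and cyc: "\<And>z. a z \<noteq> 0 \<Longrightarrow> fst z = pt Q z"
  shows "xD Q Z (adj Q Z a) = psi0 Q Z (yof Q Z a)"
proof (rule ext)
  fix u :: "('v, 'a) path \<times> ('v, 'a) path"
  obtain q z where u: "u = (q, z)" by (cases u)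
  show "xD Q Z (adj Q Z a) u = psi0 Q Z (yof Q Z a) u"
  proof (cases "(q, z) \<in> P1 Q Z")
    case False
    have "psi0 Q Z (yof Q Z a) (q, z) = 0"
      unfolding psi0_def
    proof (rule sum.neutral, rule ballI)
      fix u' assume u': "u' \<in> P0 Q Z"
      have "psi0_b Q Z u' (q, z) = (0::'k)" using psi0_b_P1[OF u'] False by blast
      then show "yof Q Z a u' * psi0_b Q Z u' (q, z) = 0" by simp
    qed
    then show ?thesis using False u by (simp add: xD_app)
  next
    case True
    then obtain b where b: "b \<in> arrs Q" "q = apath Q b" using P1_iff[of "(q, z)"] by auto
    have qB: "q \<in> B" using arr_B[OF b(1)] b(2) by simp
    have lhs: "xD Q Z (adj Q Z a) u = lam_mult Q Z a (dl q) z - lam_mult Q Z (dl q) a z"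
      using True u by (simp add: xD_app adj_Lam_app[OF dl_Lam[OF qB]] vsub_def)
    show ?thesis
    proof (cases "z \<in> B")
      case zN: False
      have "psi0 Q Z (yof Q Z a) (q, z) = 0"
        unfolding psi0_def
      proof (rule sum.neutral, rule ballI)
        fix u' assume u': "u' \<in> P0 Q Z"
        have "psi0_b Q Z u' (q, z) = (0::'k)" using zN by (simp add: psi0_b_def)
        then show "yof Q Z a u' * psi0_b Q Z u' (q, z) = 0" by simp
      qed
      moreover have "lam_mult Q Z a (dl q) z = 0" "lam_mult Q Z (dl q) a z = 0" using zN by (simp_all add: lam_mult_eq)
      ultimately show ?thesis using lhs u by simp
    next
      case zB: True
      have "psi0 Q Z (yof Q Z a) (q, z) = (\<Sum>c\<in>B. if fst c = pt Q c then yof Q Z a ((fst c, []), c) * psi0_b Q Z ((fst c, []), c) (q, z) else 0)"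
        unfolding psi0_def by (rule P0_reindex)
      also have "\<dots> = (\<Sum>c\<in>B. (if tgt Q b = fst c \<and> z = (src Q b, b # snd c) then a c else 0)
                          - (if src Q b = fst c \<and> z = (fst c, snd c @ [b]) then a c else 0))"
      proof (rule sum.cong[OF refl])
        fix c assume cB: "c \<in> B"
        show "(if fst c = pt Q c then yof Q Z a ((fst c, []), c) * psi0_b Q Z ((fst c, []), c) (q, z) else 0)
          = (if tgt Q b = fst c \<and> z = (src Q b, b # snd c) then a c else 0)
                          - (if src Q b = fst c \<and> z = (fst c, snd c @ [b]) then a c else 0)"
        proof (cases "a c = 0")
          case True then show ?thesis by (simp add: yof_def)
        next
          case False
          have cc: "fst c = pt Q c" by (rule cyc[OF False])
          have "((fst c, []), c) \<in> P0 Q Z" using P0_iff cB cc by simp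
          then have "yof Q Z a ((fst c, []), c) = - a c" by (simp add: yof_def)
          then show ?thesis using cc zB unfolding b(2) psi0_b_eval[OF b(1)] by (simp add: algebra_simps)
        qed
      qed
      also have "\<dots> = (\<Sum>c\<in>B. if tgt Q b = fst c \<and> z = (src Q b, b # snd c) then a c else 0)
                     - (\<Sum>c\<in>B. if src Q b = fst c \<and> z = (fst c, snd c @ [b]) then a c else 0)"
        by (rule sum_subtractf)
      also have "(\<Sum>c\<in>B. if tgt Q b = fst c \<and> z = (src Q b, b # snd c) then a c else 0) = lam_mult Q Z a (dl q) z"
        unfolding LM1[OF qB] using zB by (auto simp: b(2) apath_def cat_def intro!: sum.cong)
      also have "(\<Sum>c\<in>B. if src Q b = fst c \<and> z = (fst c, snd c @ [b]) then a c else 0) = lam_mult Q Z (dl q) a z"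
        unfolding LM2[OF qB] using zB
      proof (simp, intro sum.cong refl)
        fix c assume "c \<in> B"
        show "(if src Q b = fst c \<and> z = (fst c, snd c @ [b]) then a c else 0) = (if pt Q c = fst q \<and> cat c q = z then a c else 0)"
        proof (cases "a c = 0")
          case True then show ?thesis by simp
        next
          case False
          then have "fst c = pt Q c" by (rule cyc)
          then show ?thesis by (auto simp: b(2) apath_def cat_def)
        qed
      qed
      finally show ?thesis using lhs u by simp
    qed
  qed
qed

end

context MA begin

lemma KER1:
  fixes y :: "('v, 'a, 'k::field) pvec"
  assumes y: "y \<in> vecs (P0 Q Z)"
  shows "psi0 Q Z y \<in> Ker1 Q Z \<and> Phi Q Z (psi0 Q Z y) \<in> Ad Q Z"
proof -
  define a :: "('v, 'a, 'k) lam" where "a = (\<lambda>c. if c \<in> B \<and> fst c = pt Q c then - y ((fst c, []), c) else 0)"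
  have aL: "a \<in> Lam Q Z" by (simp add: a_def Lam_iff)
  have cyc: "fst z = pt Q z" if "a z \<noteq> 0" for z using that by (simp add: a_def split: if_splits)
  have ya: "yof Q Z a = y"
  proof
    fix u :: "('v, 'a) path \<times> ('v, 'a) path"
    show "yof Q Z a u = y u"
    proof (cases "u \<in> P0 Q Z")
      case True
      then have h: "snd u \<in> B" "fst (snd u) = pt Q (snd u)" "fst u = (fst (snd u), [])" using P0_iff by auto
      have "((fst (snd u), []), snd u) = u" using h(3) by (simp add: prod_eq_iff)
      then show ?thesis using True h by (simp add: yof_def a_def)
    next
      case False
      have "y u = 0" using y False unfolding vecs_def by blast
      then show ?thesis using False by (simp add: yof_def)
    qed
  qed
  have AD: "adj Q Z a \<in> Der Q Z" by (rule adj_Der[OF aL])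
  have vz: "adj Q Z a (dl (v, [])) = vzero" if "v \<in> verts Q" for v by (rule adj_vz_cyc[OF aL cyc that])
  have g: "xD Q Z (adj Q Z a) \<in> Ker1 Q Z \<and> Phi Q Z (xD Q Z (adj Q Z a)) = adj Q Z a" by (rule GEN[OF AD vz])
  have e: "xD Q Z (adj Q Z a) = psi0 Q Z y" using CMP0[OF aL cyc] ya by simp
  show ?thesis using g aL unfolding e Ad_iff by blast
qed

lemma KER2:
  fixes x :: "('v, 'a, 'k::field) pvec"
  assumes x: "x \<in> Ker1 Q Z" and ad: "Phi Q Z x \<in> Ad Q Z"
  shows "x \<in> Im0 Q Z"
proof -
  obtain a where aL: "a \<in> Lam Q Z" and pa: "Phi Q Z x = adj Q Z a" using ad Ad_iff by blast
  have vz: "adj Q Z a (dl (v, [])) = vzero" if "v \<in> verts Q" for v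
    using Phi_vert[OF that, of x] pa by simp
  have cyc: "fst z = pt Q z" if "a z \<noteq> 0" for z by (rule cyc_of_adj[OF aL vz that])
  have xv: "x \<in> vecs (P1 Q Z)" using x by (simp add: Ker1_def)
  have "x = xD Q Z (Phi Q Z x)" using xD_Phi[OF xv] by simp
  also have "\<dots> = psi0 Q Z (yof Q Z a)" unfolding pa by (rule CMP0[OF aL cyc])
  finally have "x = psi0 Q Z (yof Q Z a)" .
  moreover have "yof Q Z a \<in> vecs (P0 Q Z)" by (simp add: vecs_def yof_def)
  ultimately show ?thesis by (simp add: Im0_def)
qed

lemma Phi_dl: "q \<in> B \<Longrightarrow> Phi Q Z x (dl q) = (\<lambda>z. dc Q Z x q z)"
proof
  fix z assume qB: "q \<in> B"
  have "Phi Q Z x (dl q) z = (\<Sum>w\<in>B. dl q w * dc Q Z x w z)" by (rule Phi_app[OF dl_Lam[OF qB]])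
  also have "\<dots> = (\<Sum>w\<in>B. if w = q then dc Q Z x w z else 0)"
    by (rule sum.cong) (auto simp: dl_def)
  also have "\<dots> = dc Q Z x q z" using qB fB by simp
  finally show "Phi Q Z x (dl q) z = dc Q Z x q z" .
qed

lemma dc_Lam: "(\<lambda>z. dc Q Z x q z) \<in> Lam Q Z"
  by (simp add: Lam_iff dc_notB)

lemma RI:
  "(\<Sum>v\<in>P1 Q Z. if fst v = q then H v else 0) = (\<Sum>w\<in>B. if (q, w) \<in> P1 Q Z then H (q, w) else 0)"
proof -
  have im: "{v \<in> P1 Q Z. fst v = q} = Pair q ` {w \<in> B. (q, w) \<in> P1 Q Z}"
  proof
    show "{v \<in> P1 Q Z. fst v = q} \<subseteq> Pair q ` {w \<in> B. (q, w) \<in> P1 Q Z}"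
    proof
      fix v assume v: "v \<in> {v \<in> P1 Q Z. fst v = q}"
      then have "snd v \<in> B" using P1_iff by auto
      moreover have "v = (q, snd v)" using v by (simp add: prod_eq_iff)
      ultimately show "v \<in> Pair q ` {w \<in> B. (q, w) \<in> P1 Q Z}" using v by (metis (mono_tags, lifting) image_eqI mem_Collect_eq)
    qed
  qed auto
  have "(\<Sum>v\<in>P1 Q Z. if fst v = q then H v else 0) = (\<Sum>v\<in>{v \<in> P1 Q Z. fst v = q}. H v)"
    by (rule sum.inter_filter[OF finite_P1, symmetric])
  also have "\<dots> = (\<Sum>w\<in>{w \<in> B. (q, w) \<in> P1 Q Z}. H (q, w))"
    unfolding im by (rule sum.reindex[unfolded comp_def]) (simp add: inj_on_def)
  also have "\<dots> = (\<Sum>w\<in>B. if (q, w) \<in> P1 Q Z then H (q, w) else 0)"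
    by (rule sum.inter_filter[OF fB])
  finally show ?thesis .
qed

lemma LB:
  "lie_br Q Z x y (q, z) = (\<Sum>w\<in>B. if (q, w) \<in> P1 Q Z then y (q, w) * dc Q Z x w z else 0)
                         - (\<Sum>w\<in>B. if (q, w) \<in> P1 Q Z then x (q, w) * dc Q Z y w z else 0)"
proof -
  have "lie_br Q Z x y (q, z) = (\<Sum>u\<in>P1 Q Z. \<Sum>v\<in>P1 Q Z.
      x u * y v * (if q = fst v then subst_coeff Q Z (snd v) (hd (snd (fst u))) (snd u) z else 0))
    - (\<Sum>u\<in>P1 Q Z. \<Sum>v\<in>P1 Q Z.
      x u * y v * (if q = fst u then subst_coeff Q Z (snd u) (hd (snd (fst v))) (snd v) z else 0))"
    by (simp add: lie_br_def br_b_def right_diff_distrib sum_subtractf)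
  also have "(\<Sum>u\<in>P1 Q Z. \<Sum>v\<in>P1 Q Z.
      x u * y v * (if q = fst v then subst_coeff Q Z (snd v) (hd (snd (fst u))) (snd u) z else 0))
     = (\<Sum>v\<in>P1 Q Z. if fst v = q then y v * dc Q Z x (snd v) z else 0)"
  proof -
    have "(\<Sum>u\<in>P1 Q Z. \<Sum>v\<in>P1 Q Z.
      x u * y v * (if q = fst v then subst_coeff Q Z (snd v) (hd (snd (fst u))) (snd u) z else 0))
      = (\<Sum>v\<in>P1 Q Z. \<Sum>u\<in>P1 Q Z.
      x u * y v * (if q = fst v then subst_coeff Q Z (snd v) (hd (snd (fst u))) (snd u) z else 0))"
      by (rule sum.swap)
    also have "\<dots> = (\<Sum>v\<in>P1 Q Z. if fst v = q then y v * dc Q Z x (snd v) z else 0)"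
    proof (rule sum.cong[OF refl])
      fix v
      show "(\<Sum>u\<in>P1 Q Z. x u * y v * (if q = fst v then subst_coeff Q Z (snd v) (hd (snd (fst u))) (snd u) z else 0))
        = (if fst v = q then y v * dc Q Z x (snd v) z else 0)"
        by (cases "fst v = q") (auto simp: dc_def sum_distrib_left mult_ac intro!: sum.cong)
    qed
    finally show ?thesis .
  qed
  also have "(\<Sum>u\<in>P1 Q Z. \<Sum>v\<in>P1 Q Z.
      x u * y v * (if q = fst u then subst_coeff Q Z (snd u) (hd (snd (fst v))) (snd v) z else 0))
     = (\<Sum>u\<in>P1 Q Z. if fst u = q then x u * dc Q Z y (snd u) z else 0)"
  proof (rule sum.cong[OF refl])
    fix u
    show "(\<Sum>v\<in>P1 Q Z. x u * y v * (if q = fst u then subst_coeff Q Z (snd u) (hd (snd (fst v))) (snd v) z else 0))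
      = (if fst u = q then x u * dc Q Z y (snd u) z else 0)"
      by (cases "fst u = q") (auto simp: dc_def sum_distrib_left mult_ac intro!: sum.cong)
  qed
  finally show ?thesis unfolding RI by (simp cong: if_cong)
qed

end

context MA begin

lemma CMPB:
  fixes x y :: "('v, 'a, 'k::field) pvec"
  assumes x: "x \<in> vecs (P1 Q Z)" and y: "y \<in> vecs (P1 Q Z)"
  shows "xD Q Z (mcomm (Phi Q Z x) (Phi Q Z y)) = lie_br Q Z x y"
proof (rule ext)
  fix u :: "('v, 'a) path \<times> ('v, 'a) path"
  obtain q z where u: "u = (q, z)" by (cases u)
  show "xD Q Z (mcomm (Phi Q Z x) (Phi Q Z y)) u = lie_br Q Z x y u"
  proof (cases "(q, z) \<in> P1 Q Z")
    case True
    then obtain b where b: "b \<in> arrs Q" "q = apath Q b" using P1_iff[of "(q, z)"] by auto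
    have qB: "q \<in> B" using arr_B[OF b(1)] b(2) by simp
    have D1: "dc Q Z y q w = (if (q, w) \<in> P1 Q Z then y (q, w) else 0)" for w
      unfolding b(2) by (rule DCA[OF b(1)])
    have D2: "dc Q Z x q w = (if (q, w) \<in> P1 Q Z then x (q, w) else 0)" for w
      unfolding b(2) by (rule DCA[OF b(1)])
    have "xD Q Z (mcomm (Phi Q Z x) (Phi Q Z y)) u = Phi Q Z x (\<lambda>w. dc Q Z y q w) z - Phi Q Z y (\<lambda>w. dc Q Z x q w) z"
      using True u by (simp add: xD_app mcomm_def vsub_def Phi_dl[OF qB])
    also have "\<dots> = (\<Sum>w\<in>B. dc Q Z y q w * dc Q Z x w z) - (\<Sum>w\<in>B. dc Q Z x q w * dc Q Z y w z)"
      by (simp add: Phi_app[OF dc_Lam])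
    also have "\<dots> = lie_br Q Z x y u"
      unfolding u LB D1 D2 by (simp add: if_mult_0)
    finally show ?thesis .
  next
    case False
    have z1: "(if (q, w) \<in> P1 Q Z then y (q, w) * dc Q Z x w z else 0) = 0" if "w \<in> B" for w
    proof (cases "(q, w) \<in> P1 Q Z \<and> dc Q Z x w z \<noteq> 0")
      case True
      then obtain b where b: "b \<in> arrs Q" "q = apath Q b" "w \<in> B" "fst w = src Q b" "pt Q w = tgt Q b"
        using P1_iff[of "(q, w)"] by auto
      have "fst z = fst w \<and> pt Q z = pt Q w \<and> z \<in> B" by (rule dc_par[where x=x, OF B_vp[OF b(3)]]) (use True in simp)
      then have "(q, z) \<in> P1 Q Z" using P1_iff[of "(q, z)"] b by auto
      then show ?thesis using False by simp
    qed auto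
    have z2: "(if (q, w) \<in> P1 Q Z then x (q, w) * dc Q Z y w z else 0) = 0" if "w \<in> B" for w
    proof (cases "(q, w) \<in> P1 Q Z \<and> dc Q Z y w z \<noteq> 0")
      case True
      then obtain b where b: "b \<in> arrs Q" "q = apath Q b" "w \<in> B" "fst w = src Q b" "pt Q w = tgt Q b"
        using P1_iff[of "(q, w)"] by auto
      have "fst z = fst w \<and> pt Q z = pt Q w \<and> z \<in> B" by (rule dc_par[where x=y, OF B_vp[OF b(3)]]) (use True in simp)
      then have "(q, z) \<in> P1 Q Z" using P1_iff[of "(q, z)"] b by auto
      then show ?thesis using False by simp
    qed auto
    have "lie_br Q Z x y (q, z) = 0" unfolding LB using z1 z2 by simp
    then show ?thesis using False u by (simp add: xD_app)
  qed
qed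

lemma BR:
  fixes x y :: "('v, 'a, 'k::field) pvec"
  assumes x: "x \<in> Ker1 Q Z" and y: "y \<in> Ker1 Q Z"
  shows "lie_br Q Z x y \<in> Ker1 Q Z \<and> Phi Q Z (lie_br Q Z x y) = mcomm (Phi Q Z x) (Phi Q Z y)"
proof -
  have Dx: "Phi Q Z x \<in> Der Q Z" by (rule Phi_Der[OF Ker1_psi[OF x]])
  have Dy: "Phi Q Z y \<in> Der Q Z" by (rule Phi_Der[OF Ker1_psi[OF y]])
  have DD: "mcomm (Phi Q Z x) (Phi Q Z y) \<in> Der Q Z" by (rule Der_mcomm[OF Dx Dy])
  have vz: "mcomm (Phi Q Z x) (Phi Q Z y) (dl (v, [])) = vzero" if "v \<in> verts Q" for v
    unfolding mcomm_def Phi_vert[OF that] Der_zero[OF Dx] Der_zero[OF Dy] by (simp add: vsub_def fun_eq_iff)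
  have g: "xD Q Z (mcomm (Phi Q Z x) (Phi Q Z y)) \<in> Ker1 Q Z \<and> Phi Q Z (xD Q Z (mcomm (Phi Q Z x) (Phi Q Z y))) = mcomm (Phi Q Z x) (Phi Q Z y)"
    by (rule GEN[OF DD vz])
  have "xD Q Z (mcomm (Phi Q Z x) (Phi Q Z y)) = lie_br Q Z x y"
    by (rule CMPB) (use x y in \<open>simp_all add: Ker1_def\<close>)
  then show ?thesis using g by simp
qed

end

theorem theorem1p7:
  fixes Q :: "('v, 'a) quiver" and Z :: "('v, 'a) path set"
  assumes "alg_closed TYPE('k::field)"
    and "finite_quiver Q"
    and "monomial_relations Q Z"
    and "finite (Bset Q Z)"
  shows "(\<forall>x\<in>(Ker1 Q Z :: ('v, 'a, 'k) pvec set). \<forall>y\<in>Ker1 Q Z. lie_br Q Z x y \<in> Ker1 Q Z)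
   \<and> (Im0 Q Z :: ('v, 'a, 'k) pvec set) \<subseteq> Ker1 Q Z
   \<and> (\<forall>x\<in>(Ker1 Q Z :: ('v, 'a, 'k) pvec set). \<forall>y\<in>Im0 Q Z. lie_br Q Z x y \<in> Im0 Q Z)
   \<and> (\<exists>\<Phi> :: ('v, 'a, 'k) pvec \<Rightarrow> ('v, 'a, 'k) lam \<Rightarrow> ('v, 'a, 'k) lam.
        (\<forall>x\<in>Ker1 Q Z. \<Phi> x \<in> Der Q Z)
      \<and> (\<forall>x\<in>Ker1 Q Z. \<forall>y\<in>Ker1 Q Z. \<Phi> (vadd x y) = madd (\<Phi> x) (\<Phi> y))
      \<and> (\<forall>c. \<forall>x\<in>Ker1 Q Z. \<Phi> (vscale c x) = mscale c (\<Phi> x))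
      \<and> (\<forall>D\<in>Der Q Z. \<exists>x\<in>Ker1 Q Z. msub (\<Phi> x) D \<in> Ad Q Z)
      \<and> (\<forall>x\<in>Ker1 Q Z. \<Phi> x \<in> Ad Q Z \<longleftrightarrow> x \<in> Im0 Q Z)
      \<and> (\<forall>x\<in>Ker1 Q Z. \<forall>y\<in>Ker1 Q Z.
           msub (\<Phi> (lie_br Q Z x y)) (mcomm (\<Phi> x) (\<Phi> y)) \<in> Ad Q Z))"
proof -
  interpret MA Q Z using assms(2,3,4) by (unfold_locales)
  have P1: "\<forall>x\<in>(Ker1 Q Z :: ('v, 'a, 'k) pvec set). \<forall>y\<in>Ker1 Q Z. lie_br Q Z x y \<in> Ker1 Q Z"
    using BR by blast
  have Im0K: "x \<in> Ker1 Q Z \<and> Phi Q Z x \<in> Ad Q Z" if "x \<in> (Im0 Q Z :: ('v, 'a, 'k) pvec set)" for x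
    using that KER1 unfolding Im0_def by blast
  have P2: "(Im0 Q Z :: ('v, 'a, 'k) pvec set) \<subseteq> Ker1 Q Z" using Im0K by blast
  have P3: "\<forall>x\<in>(Ker1 Q Z :: ('v, 'a, 'k) pvec set). \<forall>y\<in>Im0 Q Z. lie_br Q Z x y \<in> Im0 Q Z"
  proof (intro ballI)
    fix x y :: "('v, 'a, 'k) pvec" assume x: "x \<in> Ker1 Q Z" and y: "y \<in> Im0 Q Z"
    have yK: "y \<in> Ker1 Q Z" and yA: "Phi Q Z y \<in> Ad Q Z" using Im0K[OF y] by auto
    obtain a where aL: "a \<in> Lam Q Z" and pa: "Phi Q Z y = adj Q Z a" using yA Ad_iff by blast
    have br: "lie_br Q Z x y \<in> Ker1 Q Z" "Phi Q Z (lie_br Q Z x y) = mcomm (Phi Q Z x) (Phi Q Z y)"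
      using BR[OF x yK] by auto
    have "Phi Q Z (lie_br Q Z x y) = adj Q Z (Phi Q Z x a)"
      unfolding br(2) pa by (rule MCAD[OF Phi_Der[OF Ker1_psi[OF x]] aL])
    then have "Phi Q Z (lie_br Q Z x y) \<in> Ad Q Z" using Phi_Lam Ad_iff by blast
    then show "lie_br Q Z x y \<in> Im0 Q Z" by (rule KER2[OF br(1)])
  qed
  have zeroAd: "msub F F \<in> Ad Q Z" for F :: "('v, 'a, 'k) lam \<Rightarrow> ('v, 'a, 'k) lam"
  proof -
    have "msub F F = adj Q Z vzero"
      by (simp only: adj_def lam_mult_zero1 lam_mult_zero2) (simp add: msub_def vsub_def fun_eq_iff)
    then show ?thesis using vzero_Lam Ad_iff by blast
  qed
  have P4: "(\<forall>x\<in>(Ker1 Q Z :: ('v, 'a, 'k) pvec set). Phi Q Z x \<in> Der Q Z)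
      \<and> (\<forall>x\<in>(Ker1 Q Z :: ('v, 'a, 'k) pvec set). \<forall>y\<in>Ker1 Q Z. Phi Q Z (vadd x y) = madd (Phi Q Z x) (Phi Q Z y))
      \<and> (\<forall>c. \<forall>x\<in>(Ker1 Q Z :: ('v, 'a, 'k) pvec set). Phi Q Z (vscale c x) = mscale c (Phi Q Z x))
      \<and> (\<forall>D\<in>(Der Q Z :: (('v, 'a, 'k) lam \<Rightarrow> ('v, 'a, 'k) lam) set). \<exists>x\<in>Ker1 Q Z. msub (Phi Q Z x) D \<in> Ad Q Z)
      \<and> (\<forall>x\<in>(Ker1 Q Z :: ('v, 'a, 'k) pvec set). Phi Q Z x \<in> Ad Q Z \<longleftrightarrow> x \<in> Im0 Q Z)
      \<and> (\<forall>x\<in>(Ker1 Q Z :: ('v, 'a, 'k) pvec set). \<forall>y\<in>Ker1 Q Z.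
           msub (Phi Q Z (lie_br Q Z x y)) (mcomm (Phi Q Z x) (Phi Q Z y)) \<in> Ad Q Z)"
  proof (intro conjI ballI allI)
    show "Phi Q Z x \<in> Der Q Z" if "x \<in> Ker1 Q Z" for x :: "('v, 'a, 'k) pvec"
      by (rule Phi_Der[OF Ker1_psi[OF that]])
    show "Phi Q Z (vadd x y) = madd (Phi Q Z x) (Phi Q Z y)" for x y :: "('v, 'a, 'k) pvec"
      by (rule Phi_add)
    show "Phi Q Z (vscale c x) = mscale c (Phi Q Z x)" for c and x :: "('v, 'a, 'k) pvec"
      by (rule Phi_scale)
    show "\<exists>x\<in>Ker1 Q Z. msub (Phi Q Z x) D \<in> Ad Q Z" if "D \<in> Der Q Z" for D :: "('v, 'a, 'k) lam \<Rightarrow> ('v, 'a, 'k) lam"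
      by (rule SURJ[OF that])
    show "Phi Q Z x \<in> Ad Q Z \<longleftrightarrow> x \<in> Im0 Q Z" if "x \<in> Ker1 Q Z" for x :: "('v, 'a, 'k) pvec"
      using KER2[OF that] Im0K by blast
    show "msub (Phi Q Z (lie_br Q Z x y)) (mcomm (Phi Q Z x) (Phi Q Z y)) \<in> Ad Q Z"
      if "x \<in> Ker1 Q Z" "y \<in> Ker1 Q Z" for x y :: "('v, 'a, 'k) pvec"
      using BR[OF that] zeroAd by simp
  qed
  show ?thesis using P1 P2 P3 P4 by blast
qed

end
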